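(* Let $\rho_{AB}$ be a state on $H_A\otimes H_B$ (finite-dimensional), and let $\rho_{BA}$ denote the same state with tensor factors ordered $B,A$. Consider $\rho_{BA}\otimes\rho_{AB}$ on $H_{B}\otimes H_{A}\otimes H_{A}\otimes H_{B}$, with the nonbilocality measure taken with respect to the two middle factors $H_A\otimes H_A$. Then $N_H^b(\rho_{BA}\otimes\rho_{AB})\ge N_H(\rho_{AB})$; in particular, $N_H(\rho_{AB})>0$ implies $N_H^b(\rho_{BA}\otimes\rho_{AB})>0$.
   Context: $\|X\|=\sqrt{\mathrm{tr}(X^\dagger X)}$ is the Hilbert–Schmidt norm. The modified measurement-induced nonlocality is $N_H(\rho_{AB})=\max_{\Pi^A}\|\sqrt{\rho_{AB}}-\Pi^A(\sqrt{\rho_{AB}})\|^2$, the maximum over von Neumann measurements $\Pi^A=\{\Pi^A_k\}$ on $H_A$ with $\sum_k\Pi^A_k\rho_A\Pi^A_k=\rho_A$, where $\Pi^A(X)=\sum_k(\Pi^A_k\otimes I^B)X(\Pi^A_k\otimes I^B)$. For a state $\sigma$ on $H_1\otimes H_2\otimes H_3\otimes H_4$ of the form $\sigma=\sigma_{12}\otimes\sigma_{34}$, the nonbilocality measure is $N_H^b(\sigma)=\max_{\Pi^{23}}\|\sqrt{\sigma}-\Pi^{23}(\sqrt\sigma)\|^2$, the maximum over von Neumann measurements $\{\Pi^{23}_h\}$ on $H_2\otimes H_3$ leaving the reduced state $\sigma_{23}$ invariant, with $\Pi^{23}(X)=\sum_h(I\otimes\Pi^{23}_h\otimes I)X(I\otimes\Pi^{23}_h\otimes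 I)$. *)

theory Defs
  imports "Jordan_Normal_Form.Matrix" "HOL-Library.Complex_Order"
begin

definition mtrace :: "complex mat \<Rightarrow> complex" where
  "mtrace A = (\<Sum>i<dim_row A. A $$ (i,i))"

definition adj :: "complex mat \<Rightarrow> complex mat" where
  "adj A = mat (dim_col A) (dim_row A) (\<lambda>(i,j). cnj (A $$ (j,i)))"

definition hermitian_mat :: "nat \<Rightarrow> complex mat \<Rightarrow> bool" where
  "hermitian_mat n A \<longleftrightarrow> A \<in> carrier_mat n n \<and> adj A = A"

definition psd_mat :: "nat \<Rightarrow> complex mat \<Rightarrow> bool" where
  "psd_mat n A \<longleftrightarrow> hermitian_mat n A \<and>
     (\<forall>v \<in> carrier_vec n. (\<Sum>i<n. cnj (v $ i) * (A *\<^sub>v v) $ i) \<ge> 0)"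

definition density_mat :: "nat \<Rightarrow> complex mat \<Rightarrow> bool" where
  "density_mat n A \<longleftrightarrow> psd_mat n A \<and> mtrace A = 1"

definition msqrt :: "nat \<Rightarrow> complex mat \<Rightarrow> complex mat" where
  "msqrt n A = (THE S. psd_mat n S \<and> S * S = A)"

definition hs_norm_sq :: "complex mat \<Rightarrow> real" where
  "hs_norm_sq X = Re (mtrace (adj X * X))"

text \<open>Kronecker (tensor) product; index i of the product corresponds to
  (i div dim B, i mod dim B).\<close>
definition kron :: "complex mat \<Rightarrow> complex mat \<Rightarrow> complex mat" where
  "kron A B = mat (dim_row A * dim_row B) (dim_col A * dim_col B)
     (\<lambda>(i,j). A $$ (i div dim_row B, j div dim_col B) * B $$ (i mod dim_row B, j mod dim_col B))"

text \<open>Reordering the tensor factors: from H_A \<otimes> H_B to H_B \<otimes> H_A.\<close>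
definition swap_mat :: "nat \<Rightarrow> nat \<Rightarrow> complex mat \<Rightarrow> complex mat" where
  "swap_mat dA dB \<rho> = mat (dB * dA) (dB * dA)
     (\<lambda>(i,j). \<rho> $$ ((i mod dA) * dB + i div dA, (j mod dA) * dB + j div dA))"

text \<open>Reduced state on the middle factor of H_1 \<otimes> H_M \<otimes> H_4 (partial trace
  over the outer factors, of dimensions d1 and d4).\<close>
definition reduce_mid :: "nat \<Rightarrow> nat \<Rightarrow> nat \<Rightarrow> complex mat \<Rightarrow> complex mat" where
  "reduce_mid d1 d d4 \<sigma> = mat d d
     (\<lambda>(i,j). \<Sum>a<d1. \<Sum>b<d4. \<sigma> $$ ((a * d + i) * d4 + b, (a * d + j) * d4 + b))"

definition orthonormal_basis :: "nat \<Rightarrow> (nat \<Rightarrow> complex vec) \<Rightarrow> bool" where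
  "orthonormal_basis d u \<longleftrightarrow> (\<forall>k<d. u k \<in> carrier_vec d) \<and>
     (\<forall>k<d. \<forall>l<d. (\<Sum>i<d. cnj (u k $ i) * u l $ i) = (if k = l then 1 else 0))"

definition proj :: "complex vec \<Rightarrow> complex mat" where
  "proj v = mat (dim_vec v) (dim_vec v) (\<lambda>(i,j). v $ i * cnj (v $ j))"

definition vN_measurement :: "nat \<Rightarrow> (nat \<Rightarrow> complex mat) \<Rightarrow> bool" where
  "vN_measurement d P \<longleftrightarrow> (\<exists>u. orthonormal_basis d u \<and> (\<forall>k<d. P k = proj (u k)))"

definition meas_mid :: "nat \<Rightarrow> nat \<Rightarrow> nat \<Rightarrow> (nat \<Rightarrow> complex mat) \<Rightarrow> complex mat \<Rightarrow> complex mat" where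
  "meas_mid d1 d d4 P X =
     (let n = d1 * d * d4 in
      mat n n (\<lambda>(i,j). \<Sum>k<d. (kron (kron (1\<^sub>m d1) (P k)) (1\<^sub>m d4) * X *
                          kron (kron (1\<^sub>m d1) (P k)) (1\<^sub>m d4)) $$ (i,j)))"

text \<open>Modified MIN N_H of a state on H_A \<otimes> H_B (dims dA, dB).
  The maximum is rendered as a supremum (it is attained by compactness).\<close>
definition N_H :: "nat \<Rightarrow> nat \<Rightarrow> complex mat \<Rightarrow> real" where
  "N_H dA dB \<rho> =
     (let S = msqrt (dA * dB) \<rho>; \<rho>A = reduce_mid 1 dA dB \<rho> in
      Sup {hs_norm_sq (S - meas_mid 1 dA dB P S) | P.
             vN_measurement dA P \<and> meas_mid 1 dA 1 P \<rho>A = \<rho>A})"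

definition N_H_b :: "nat \<Rightarrow> nat \<Rightarrow> nat \<Rightarrow> nat \<Rightarrow> complex mat \<Rightarrow> real" where
  "N_H_b d1 d2 d3 d4 \<sigma> =
     (let S = msqrt (d1 * d2 * d3 * d4) \<sigma>; \<sigma>23 = reduce_mid d1 (d2 * d3) d4 \<sigma> in
      Sup {hs_norm_sq (S - meas_mid d1 (d2 * d3) d4 P S) | P.
             vN_measurement (d2 * d3) P \<and> meas_mid 1 (d2 * d3) 1 P \<sigma>23 = \<sigma>23})"

end

theory Submission
  imports Defs "Jordan_Normal_Form.Schur_Decomposition"
begin


lemma sum_single:
  assumes "finite A" "a \<in> A" "\<And>x. x \<in> A \<Longrightarrow> x \<noteq> a \<Longrightarrow> f x = 0"
  shows "sum f A = f a"
proof -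
  have "sum f A = f a + sum f (A - {a})" using assms by (simp add: sum.remove)
  also have "sum f (A - {a}) = 0" using assms by (intro sum.neutral) auto
  finally show ?thesis by simp
qed

definition ipd :: "nat \<Rightarrow> complex vec \<Rightarrow> complex vec \<Rightarrow> complex" where
  "ipd n u v = (\<Sum>i<n. cnj (u $ i) * v $ i)"

lemma mv_entry:
  assumes "A \<in> carrier_mat n m" "v \<in> carrier_vec m" "i < n"
  shows "(A *\<^sub>v v) $ i = (\<Sum>j<m. A $$ (i,j) * v $ j)"
  using assms by (auto simp: scalar_prod_def lessThan_atLeast0 intro!: sum.cong)

lemma mm_entry:
  assumes "A \<in> carrier_mat n m" "B \<in> carrier_mat m p" "i < n" "j < p"
  shows "(A * B) $$ (i,j) = (\<Sum>k<m. A $$ (i,k) * B $$ (k,j))"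
  using assms by (auto simp: scalar_prod_def lessThan_atLeast0 intro!: sum.cong)

declare index_mult_mat_vec[simp del]

lemma adj_entry: "i < dim_col A \<Longrightarrow> j < dim_row A \<Longrightarrow> adj A $$ (i,j) = cnj (A $$ (j,i))"
  by (simp add: adj_def)

lemma adj_dims[simp]: "dim_row (adj A) = dim_col A" "dim_col (adj A) = dim_row A"
  by (simp_all add: adj_def)

lemma herm_entry:
  assumes "hermitian_mat n A" "i < n" "j < n"
  shows "A $$ (j,i) = cnj (A $$ (i,j))"
proof -
  have A: "A \<in> carrier_mat n n" "adj A = A" using assms(1) by (auto simp: hermitian_mat_def)
  have "adj A $$ (j,i) = cnj (A $$ (i,j))" using A assms by (intro adj_entry) auto
  then show ?thesis using A(2) by simp
qed

lemma ipd_minus: "x \<in> carrier_vec n \<Longrightarrow> y \<in> carrier_vec n \<Longrightarrow> ipd n u (x - y) = ipd n u x - ipd n u y"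
  by (auto simp: ipd_def algebra_simps sum_subtractf)

lemma ipd_smult_right: "x \<in> carrier_vec n \<Longrightarrow> ipd n u (c \<cdot>\<^sub>v x) = c * ipd n u x"
  by (auto simp: ipd_def sum_distrib_left intro!: sum.cong)

lemma ipd_smult_left: "x \<in> carrier_vec n \<Longrightarrow> ipd n (c \<cdot>\<^sub>v x) y = cnj c * ipd n x y"
  by (auto simp: ipd_def sum_distrib_left intro!: sum.cong)

lemma ipd_cnj: "ipd n x y = cnj (ipd n y x)"
  by (simp add: ipd_def mult.commute)

lemma ipd_self: "ipd n x x = of_real (\<Sum>i<n. (cmod (x $ i))\<^sup>2)"
  unfolding ipd_def of_real_sum
  by (rule sum.cong) (simp_all add: complex_norm_square mult.commute del: of_real_power)

lemma ipd_self_pos: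
  assumes "x \<in> carrier_vec n" "x \<noteq> 0\<^sub>v n"
  shows "(\<Sum>i<n. (cmod (x $ i))\<^sup>2) > 0"
proof -
  obtain i where i: "i < n" "x $ i \<noteq> 0" using assms by (metis eq_vecI carrier_vecD index_zero_vec)
  have "(\<Sum>i<n. (cmod (x $ i))\<^sup>2) \<ge> (cmod (x $ i))\<^sup>2"
    by (rule member_le_sum) (use i in auto)
  moreover have "(cmod (x $ i))\<^sup>2 > 0" using i by simp
  ultimately show ?thesis by linarith
qed

lemma herm_ipd:
  assumes H: "hermitian_mat n A" and u: "u \<in> carrier_vec n" and v: "v \<in> carrier_vec n"
  shows "ipd n u (A *\<^sub>v v) = ipd n (A *\<^sub>v u) v"
proof -
  have A: "A \<in> carrier_mat n n" using assms by (auto simp: hermitian_mat_def)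
  have e1: "\<And>i. i < n \<Longrightarrow> (A *\<^sub>v v) $ i = (\<Sum>j<n. A $$ (i,j) * v $ j)"
    by (rule mv_entry[OF A v])
  have e2: "\<And>i. i < n \<Longrightarrow> (A *\<^sub>v u) $ i = (\<Sum>j<n. A $$ (i,j) * u $ j)"
    by (rule mv_entry[OF A u])
  have "ipd n u (A *\<^sub>v v) = (\<Sum>i<n. cnj (u $ i) * (\<Sum>j<n. A $$ (i,j) * v $ j))"
    unfolding ipd_def by (rule sum.cong) (simp_all add: e1)
  also have "\<dots> = (\<Sum>i<n. \<Sum>j<n. cnj (u $ i) * A $$ (i,j) * v $ j)"
    by (simp add: sum_distrib_left mult.assoc)
  also have "\<dots> = (\<Sum>j<n. \<Sum>i<n. cnj (u $ i) * A $$ (i,j) * v $ j)"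
    by (rule sum.swap)
  also have "\<dots> = (\<Sum>j<n. cnj (\<Sum>i<n. A $$ (j,i) * u $ i) * v $ j)"
  proof (intro sum.cong refl)
    fix j assume j: "j \<in> {..<n}"
    have "(\<Sum>i<n. cnj (u $ i) * A $$ (i,j) * v $ j) = (\<Sum>i<n. cnj (A $$ (j,i) * u $ i) * v $ j)"
    proof (intro sum.cong refl)
      fix i assume i: "i \<in> {..<n}"
      have "A $$ (j,i) = cnj (A $$ (i,j))" using herm_entry[OF H, of i j] i j by simp
      then show "cnj (u $ i) * A $$ (i,j) * v $ j = cnj (A $$ (j,i) * u $ i) * v $ j" by simp
    qed
    also have "\<dots> = cnj (\<Sum>i<n. A $$ (j,i) * u $ i) * v $ j"
      by (simp add: sum_distrib_right)
    finally show "(\<Sum>i<n. cnj (u $ i) * A $$ (i,j) * v $ j) = cnj (\<Sum>i<n. A $$ (j,i) * u $ i) * v $ j" .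
  qed
  also have "\<dots> = ipd n (A *\<^sub>v u) v"
    unfolding ipd_def by (rule sum.cong) (simp_all add: e2)
  finally show ?thesis .
qed

fun chainv :: "complex mat \<Rightarrow> complex list \<Rightarrow> complex vec \<Rightarrow> complex vec" where
  "chainv A [] v = v"
| "chainv A (e # es) v = A *\<^sub>v chainv A es v - e \<cdot>\<^sub>v chainv A es v"

lemma chainv_carrier: "A \<in> carrier_mat n n \<Longrightarrow> v \<in> carrier_vec n \<Longrightarrow> chainv A es v \<in> carrier_vec n"
  by (induction es) auto

lemma chainv_sim:
  assumes P: "P \<in> carrier_mat n n" and B: "B \<in> carrier_mat n n" and Q: "Q \<in> carrier_mat n n"
    and QP: "Q * P = 1\<^sub>m n" and PQ: "P * Q = 1\<^sub>m n"
    and v: "v \<in> carrier_vec n"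
  shows "chainv (P * B * Q) es v = P *\<^sub>v chainv B es (Q *\<^sub>v v)"
proof (induction es)
  case Nil
  have "P *\<^sub>v (Q *\<^sub>v v) = (P * Q) *\<^sub>v v" by (rule assoc_mult_mat_vec[OF P Q v, symmetric])
  also have "\<dots> = v" using PQ v by simp
  finally show ?case by simp
next
  case (Cons e es)
  define z where "z = chainv B es (Q *\<^sub>v v)"
  have Qv: "Q *\<^sub>v v \<in> carrier_vec n" using Q v by simp
  have z: "z \<in> carrier_vec n" unfolding z_def by (rule chainv_carrier[OF B Qv])
  have Pz: "P *\<^sub>v z \<in> carrier_vec n" using P z by simp
  have PBQ: "P * B * Q \<in> carrier_mat n n" using P B Q by simp
  have "(P * B * Q) *\<^sub>v (P *\<^sub>v z) = ((P * B * Q) * P) *\<^sub>v z"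
    by (rule assoc_mult_mat_vec[OF PBQ P z, symmetric])
  also have "(P * B * Q) * P = (P * B) * (Q * P)"
    using P B Q by (metis assoc_mult_mat mult_carrier_mat)
  also have "\<dots> = P * B" using QP P B by simp
  also have "(P * B) *\<^sub>v z = P *\<^sub>v (B *\<^sub>v z)" by (rule assoc_mult_mat_vec[OF P B z])
  finally have 1: "(P * B * Q) *\<^sub>v (P *\<^sub>v z) = P *\<^sub>v (B *\<^sub>v z)" .
  have Bz: "B *\<^sub>v z \<in> carrier_vec n" using B z by simp
  have 2: "P *\<^sub>v (B *\<^sub>v z - e \<cdot>\<^sub>v z) = P *\<^sub>v (B *\<^sub>v z) - e \<cdot>\<^sub>v (P *\<^sub>v z)"
  proof -
    have ez: "e \<cdot>\<^sub>v z \<in> carrier_vec n" using z by simp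
    show ?thesis using mult_minus_distrib_mat_vec[OF P Bz ez] mult_mat_vec[OF P z] by simp
  qed
  show ?case using Cons 1 2 by (simp add: z_def)
qed

lemma chainv_triang:
  assumes B: "B \<in> carrier_mat n n" and ut: "upper_triangular B" and dg: "diag_mat B = es"
    and z: "z \<in> carrier_vec n"
  shows "j \<le> n \<Longrightarrow> j \<le> r \<Longrightarrow> r < n \<Longrightarrow> chainv B (drop j es) z $ r = 0"
proof (induction "n - j" arbitrary: j r)
  case 0
  then show ?case by simp
next
  case (Suc x)
  have len: "length es = n" using dg B by (auto simp: diag_mat_def)
  have jn: "j < n" using Suc by simp
  have ej: "es ! j = B $$ (j,j)" using dg B jn by (auto simp: diag_mat_def)
  have dr: "drop j es = es ! j # drop (Suc j) es" using jn len by (simp add: Cons_nth_drop_Suc)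
  define y where "y = chainv B (drop (Suc j) es) z"
  have y: "y \<in> carrier_vec n" unfolding y_def using B z by (rule chainv_carrier)
  have IH: "\<And>s. Suc j \<le> s \<Longrightarrow> s < n \<Longrightarrow> y $ s = 0"
    unfolding y_def using Suc by (intro Suc.hyps) auto
  have "(B *\<^sub>v y) $ r = (\<Sum>s<n. B $$ (r,s) * y $ s)" using B y Suc by (simp add: mv_entry)
  also have "\<dots> = B $$ (r,r) * y $ r"
  proof (rule sum_single)
    fix s assume s: "s \<in> {..<n}" "s \<noteq> r"
    show "B $$ (r,s) * y $ s = 0"
    proof (cases "s < r")
      case True
      then show ?thesis using upper_triangularD[OF ut True] Suc B by simp
    next
      case False
      then have "Suc j \<le> s" using s Suc by simp
      then show ?thesis using IH s by simp
    qed
  qed (use Suc in auto)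
  finally have By: "(B *\<^sub>v y) $ r = B $$ (r,r) * y $ r" .
  show ?case
  proof (cases "r = j")
    case True
    then show ?thesis unfolding dr using By ej y Suc B by (simp add: y_def)
  next
    case False
    then have "y $ r = 0" using IH Suc by auto
    then show ?thesis unfolding dr using By ej y Suc B by (simp add: y_def)
  qed
qed


lemma vec_minus_zero_eq:
  fixes x y :: "complex vec"
  assumes "x \<in> carrier_vec n" "y \<in> carrier_vec n" "x - y = 0\<^sub>v n"
  shows "x = y"
proof (rule eq_vecI)
  fix i assume i: "i < dim_vec y"
  have "(x - y) $ i = 0\<^sub>v n $ i" by (simp only: assms(3))
  then have "(x - y) $ i = 0" using assms(2) i by simp
  moreover have "(x - y) $ i = x $ i - y $ i" using assms(1,2) i by simp
  ultimately show "x $ i = y $ i" by simp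
qed (use assms in auto)

lemma eigvec_in_subspace:
  fixes A :: "complex mat"
  assumes A: "A \<in> carrier_mat n n" and Vc: "\<And>v. v \<in> V \<Longrightarrow> v \<in> carrier_vec n"
    and Vcl: "\<And>v e. v \<in> V \<Longrightarrow> A *\<^sub>v v - e \<cdot>\<^sub>v v \<in> V"
    and v: "v \<in> V" and v0: "v \<noteq> 0\<^sub>v n"
  shows "\<exists>w\<in>V. w \<noteq> 0\<^sub>v n \<and> (\<exists>\<mu>. A *\<^sub>v w = \<mu> \<cdot>\<^sub>v w)"
proof -
  obtain es where cp: "char_poly A = (\<Prod>a\<leftarrow>es. [:- a, 1:])" and len: "length es = n"
    using char_poly_factorized[OF A] by blast
  obtain B P Q where sd: "schur_decomposition A es = (B,P,Q)"
    by (cases "schur_decomposition A es") auto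
  from schur_decomposition[OF A cp sd] have sim: "similar_mat_wit A B P Q"
    and ut: "upper_triangular B" and dg: "diag_mat B = es" by auto
  from sim A have P: "P \<in> carrier_mat n n" and B: "B \<in> carrier_mat n n" and Q: "Q \<in> carrier_mat n n"
    and PQ: "P * Q = 1\<^sub>m n" and QP: "Q * P = 1\<^sub>m n" and APBQ: "A = P * B * Q"
    unfolding similar_mat_wit_def Let_def by auto
  have vc: "v \<in> carrier_vec n" using Vc v by auto
  define z where "z j = chainv A (drop j es) v" for j
  have chV: "chainv A fs v \<in> V" for fs
    by (induction fs) (auto simp: v Vcl)
  have zV: "z j \<in> V" for j unfolding z_def by (rule chV)
  have zc: "z j \<in> carrier_vec n" for j using Vc zV by auto
  have Qv: "Q *\<^sub>v v \<in> carrier_vec n" using Q vc by simp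
  have cB: "chainv B es (Q *\<^sub>v v) = 0\<^sub>v n"
  proof (rule eq_vecI)
    fix r assume r: "r < dim_vec (0\<^sub>v n :: complex vec)"
    have "chainv B (drop 0 es) (Q *\<^sub>v v) $ r = 0"
      by (rule chainv_triang[OF B ut dg Qv]) (use r in auto)
    then show "chainv B es (Q *\<^sub>v v) $ r = 0\<^sub>v n $ r" using r by simp
  qed (use chainv_carrier[OF B Qv] in auto)
  have z0: "z 0 = 0\<^sub>v n"
  proof -
    have "z 0 = chainv (P * B * Q) es v" unfolding z_def APBQ by simp
    also have "\<dots> = P *\<^sub>v chainv B es (Q *\<^sub>v v)" by (rule chainv_sim[OF P B Q QP PQ vc])
    also have "\<dots> = 0\<^sub>v n" unfolding cB
    proof (rule eq_vecI)
      fix i assume i: "i < dim_vec (0\<^sub>v n :: complex vec)"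
      then show "(P *\<^sub>v 0\<^sub>v n) $ i = 0\<^sub>v n $ i" using P by (simp add: mv_entry)
    qed (use P in simp)
    finally show ?thesis .
  qed
  have zn: "z n = v" by (simp add: z_def len)
  have main: "j \<le> n \<Longrightarrow> z j \<noteq> 0\<^sub>v n \<Longrightarrow> \<exists>w\<in>V. w \<noteq> 0\<^sub>v n \<and> (\<exists>\<mu>. A *\<^sub>v w = \<mu> \<cdot>\<^sub>v w)" for j
  proof (induction j)
    case 0
    then show ?case using z0 by simp
  next
    case (Suc j)
    show ?case
    proof (cases "z j = 0\<^sub>v n")
      case True
      have dr: "drop j es = es ! j # drop (Suc j) es" using Suc len by (simp add: Cons_nth_drop_Suc)
      have "z j = A *\<^sub>v z (Suc j) - (es ! j) \<cdot>\<^sub>v z (Suc j)" unfolding z_def dr by simp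
      then have eq: "A *\<^sub>v z (Suc j) - (es ! j) \<cdot>\<^sub>v z (Suc j) = 0\<^sub>v n" using True by simp
      have "A *\<^sub>v z (Suc j) = (es ! j) \<cdot>\<^sub>v z (Suc j)"
        by (rule vec_minus_zero_eq[OF _ _ eq]) (use zc[of "Suc j"] A in auto)
      then show ?thesis using zV[of "Suc j"] Suc by blast
    next
      case False
      then show ?thesis using Suc by simp
    qed
  qed
  show ?thesis using main[of n] zn v0 by simp
qed

lemma exists_orth:
  assumes kn: "k < n" and uc: "\<And>i. i < k \<Longrightarrow> u i \<in> carrier_vec n"
    and on: "\<And>i j. i < k \<Longrightarrow> j < k \<Longrightarrow> ipd n (u i) (u j) = (if i = j then 1 else 0)"
  shows "\<exists>v\<in>carrier_vec n. v \<noteq> 0\<^sub>v n \<and> (\<forall>i<k. ipd n (u i) v = 0)"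
proof (rule ccontr)
  assume nex: "\<not> ?thesis"
  define vj where "vj j = vec n (\<lambda>r. (if r = j then 1 else 0) - (\<Sum>i<k. cnj (u i $ j) * u i $ r))" for j
  have vjc: "vj j \<in> carrier_vec n" for j unfolding vj_def by simp
  have orth: "ipd n (u l) (vj j) = 0" if l: "l < k" and j: "j < n" for l j
  proof -
    have "ipd n (u l) (vj j) = (\<Sum>r<n. cnj (u l $ r) * (if r = j then 1 else 0))
        - (\<Sum>r<n. \<Sum>i<k. cnj (u i $ j) * (cnj (u l $ r) * u i $ r))"
      unfolding ipd_def vj_def
      by (simp add: right_diff_distrib sum_subtractf sum_distrib_left mult.left_commute)
    also have "(\<Sum>r<n. cnj (u l $ r) * (if r = j then 1 else 0)) = cnj (u l $ j)"
      using j by (simp add: if_distrib cong: if_cong)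
    also have "(\<Sum>r<n. \<Sum>i<k. cnj (u i $ j) * (cnj (u l $ r) * u i $ r))
        = (\<Sum>i<k. cnj (u i $ j) * ipd n (u l) (u i))"
      unfolding ipd_def by (subst sum.swap) (simp add: sum_distrib_left)
    also have "\<dots> = (\<Sum>i<k. if i = l then cnj (u l $ j) else 0)"
      by (intro sum.cong refl) (use l on in auto)
    also have "\<dots> = cnj (u l $ j)" using l by simp
    finally show ?thesis by simp
  qed
  have allz: "vj j = 0\<^sub>v n" if "j < n" for j
    using nex vjc orth that by blast
  have diag: "(\<Sum>i<k. cnj (u i $ j) * u i $ j) = 1" if j: "j < n" for j
  proof -
    have "vj j $ j = 0" using allz[OF j] j by simp
    then show ?thesis using j unfolding vj_def by simp
  qed
  have "of_nat n = (\<Sum>j<n. (1::complex))" by simp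
  also have "\<dots> = (\<Sum>j<n. \<Sum>i<k. cnj (u i $ j) * u i $ j)" using diag by simp
  also have "\<dots> = (\<Sum>i<k. ipd n (u i) (u i))" unfolding ipd_def by (rule sum.swap)
  also have "\<dots> = (\<Sum>i<k. (1::complex))" using on by simp
  also have "\<dots> = of_nat k" by simp
  finally have "n = k" by (simp add: of_nat_eq_iff)
  then show False using kn by simp
qed


declare index_mult_mat(1)[simp del]

lemma cnj_eq_real: "cnj z = z \<Longrightarrow> z = complex_of_real (Re z)"
  by (simp add: complex_eq_iff)

lemma spectral_partial:
  assumes H: "hermitian_mat n A"
  shows "k \<le> n \<Longrightarrow> \<exists>u (l::nat \<Rightarrow> real). (\<forall>i<k. u i \<in> carrier_vec n)
     \<and> (\<forall>i<k. \<forall>j<k. ipd n (u i) (u j) = (if i = j then 1 else 0))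
     \<and> (\<forall>i<k. A *\<^sub>v u i = complex_of_real (l i) \<cdot>\<^sub>v u i)"
proof (induction k)
  case 0
  show ?case by auto
next
  case (Suc k)
  have A: "A \<in> carrier_mat n n" using H by (auto simp: hermitian_mat_def)
  from Suc obtain u and l :: "nat \<Rightarrow> real" where uc: "\<forall>i<k. u i \<in> carrier_vec n"
    and on: "\<forall>i<k. \<forall>j<k. ipd n (u i) (u j) = (if i = j then 1 else 0)"
    and ev: "\<forall>i<k. A *\<^sub>v u i = complex_of_real (l i) \<cdot>\<^sub>v u i" by auto
  have kn: "k < n" using Suc by simp
  define V where "V = {v \<in> carrier_vec n. \<forall>i<k. ipd n (u i) v = 0}"
  have Vc: "\<And>v. v \<in> V \<Longrightarrow> v \<in> carrier_vec n" unfolding V_def by auto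
  have Vcl: "A *\<^sub>v v - e \<cdot>\<^sub>v v \<in> V" if v: "v \<in> V" for v e
  proof -
    have vc: "v \<in> carrier_vec n" using v Vc by auto
    have "ipd n (u i) (A *\<^sub>v v - e \<cdot>\<^sub>v v) = 0" if i: "i < k" for i
    proof -
      have "ipd n (u i) (A *\<^sub>v v - e \<cdot>\<^sub>v v) = ipd n (u i) (A *\<^sub>v v) - e * ipd n (u i) v"
        using A vc by (simp add: ipd_minus ipd_smult_right)
      also have "ipd n (u i) (A *\<^sub>v v) = ipd n (A *\<^sub>v u i) v"
        using herm_ipd[OF H] uc i vc by simp
      also have "\<dots> = ipd n (complex_of_real (l i) \<cdot>\<^sub>v u i) v" using ev i by simp
      also have "\<dots> = complex_of_real (l i) * ipd n (u i) v" using ipd_smult_left uc i by simp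
      finally show ?thesis using v i unfolding V_def by simp
    qed
    then show ?thesis using A vc unfolding V_def by simp
  qed
  obtain v0 where v0: "v0 \<in> carrier_vec n" "v0 \<noteq> 0\<^sub>v n" "\<forall>i<k. ipd n (u i) v0 = 0"
    using exists_orth[OF kn, of u] uc on by auto
  have v0V: "v0 \<in> V" using v0 unfolding V_def by auto
  obtain w \<mu> where wV: "w \<in> V" and w0: "w \<noteq> 0\<^sub>v n" and Aw: "A *\<^sub>v w = \<mu> \<cdot>\<^sub>v w"
    using eigvec_in_subspace[OF A Vc Vcl v0V v0(2)] by blast
  have wc: "w \<in> carrier_vec n" using wV Vc by auto
  define nw where "nw = (\<Sum>i<n. (cmod (w $ i))\<^sup>2)"
  have nw: "nw > 0" unfolding nw_def by (rule ipd_self_pos[OF wc w0])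
  have ww: "ipd n w w = complex_of_real nw" unfolding nw_def by (rule ipd_self)
  have "ipd n w (A *\<^sub>v w) = \<mu> * complex_of_real nw" using Aw ww wc by (simp add: ipd_smult_right)
  moreover have "ipd n w (A *\<^sub>v w) = cnj \<mu> * complex_of_real nw"
    using herm_ipd[OF H wc wc] Aw ww wc by (simp add: ipd_smult_left)
  ultimately have "\<mu> * complex_of_real nw = cnj \<mu> * complex_of_real nw" by metis
  moreover have "complex_of_real nw \<noteq> 0" using nw by simp
  ultimately have "cnj \<mu> = \<mu>" by (metis mult_right_cancel)
  then have mu: "\<mu> = complex_of_real (Re \<mu>)" by (rule cnj_eq_real)
  define c where "c = complex_of_real (1 / sqrt nw)"
  define w' where "w' = c \<cdot>\<^sub>v w"
  have w'c: "w' \<in> carrier_vec n" unfolding w'_def using wc by simp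
  have cc: "cnj c = c" unfolding c_def by simp
  have w'w': "ipd n w' w' = 1"
  proof -
    have "ipd n w' w' = cnj c * (c * ipd n w w)" unfolding w'_def using wc
      by (simp add: ipd_smult_left ipd_smult_right)
    also have "\<dots> = complex_of_real ((1 / sqrt nw) * (1 / sqrt nw) * nw)"
      unfolding cc ww c_def of_real_mult by (simp only: mult.assoc complex_cnj_complex_of_real)
    also have "(1 / sqrt nw) * (1 / sqrt nw) * nw = 1" using nw
      by (simp add: field_simps)
    finally show ?thesis by simp
  qed
  have uw': "ipd n (u i) w' = 0" if "i < k" for i
    unfolding w'_def using wc wV that unfolding V_def by (simp add: ipd_smult_right)
  have w'u: "ipd n w' (u i) = 0" if "i < k" for i
    using uw'[OF that] ipd_cnj[of n w' "u i"] by simp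
  have Aw': "A *\<^sub>v w' = complex_of_real (Re \<mu>) \<cdot>\<^sub>v w'"
  proof -
    have "A *\<^sub>v w' = c \<cdot>\<^sub>v (A *\<^sub>v w)" unfolding w'_def by (rule mult_mat_vec[OF A wc])
    also have "\<dots> = (c * \<mu>) \<cdot>\<^sub>v w" unfolding Aw by (simp add: smult_smult_assoc)
    also have "\<dots> = \<mu> \<cdot>\<^sub>v w'" unfolding w'_def by (simp add: smult_smult_assoc mult.commute)
    finally show ?thesis using mu by simp
  qed
  define u' where "u' = u(k := w')"
  define l' where "l' = l(k := Re \<mu>)"
  have "\<forall>i<Suc k. u' i \<in> carrier_vec n" using uc w'c unfolding u'_def by (auto simp: less_Suc_eq)
  moreover have "\<forall>i<Suc k. \<forall>j<Suc k. ipd n (u' i) (u' j) = (if i = j then 1 else 0)"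
    using on w'w' uw' w'u unfolding u'_def by (auto simp: less_Suc_eq)
  moreover have "\<forall>i<Suc k. A *\<^sub>v u' i = complex_of_real (l' i) \<cdot>\<^sub>v u' i"
    using ev Aw' unfolding u'_def l'_def by (auto simp: less_Suc_eq)
  ultimately show ?case by blast
qed

lemma spectral:
  assumes H: "hermitian_mat n A"
  shows "\<exists>u (l::nat \<Rightarrow> real). orthonormal_basis n u \<and> (\<forall>i<n. A *\<^sub>v u i = complex_of_real (l i) \<cdot>\<^sub>v u i)"
  using spectral_partial[OF H, of n] unfolding orthonormal_basis_def ipd_def by auto

lemma onb_complete:
  assumes ob: "orthonormal_basis n u" and i: "i < n" and j: "j < n"
  shows "(\<Sum>k<n. u k $ i * cnj (u k $ j)) = (if i = j then 1 else 0)"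
proof -
  define U where "U = mat n n (\<lambda>(i,k). u k $ i)"
  define Uh where "Uh = mat n n (\<lambda>(k,i). cnj (u k $ i))"
  have U: "U \<in> carrier_mat n n" and Uh: "Uh \<in> carrier_mat n n" unfolding U_def Uh_def by auto
  have "Uh * U = 1\<^sub>m n"
  proof (rule eq_matI)
    fix k l assume k: "k < dim_row (1\<^sub>m n :: complex mat)" and l: "l < dim_col (1\<^sub>m n :: complex mat)"
    have "(Uh * U) $$ (k,l) = (\<Sum>i<n. cnj (u k $ i) * u l $ i)"
      using k l by (subst mm_entry[OF Uh U]) (auto simp: U_def Uh_def)
    also have "\<dots> = (if k = l then 1 else 0)" using ob k l unfolding orthonormal_basis_def by simp
    finally show "(Uh * U) $$ (k,l) = 1\<^sub>m n $$ (k,l)" using k l by simp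
  qed (use U Uh in auto)
  then have "U * Uh = 1\<^sub>m n" by (rule mat_mult_left_right_inverse[OF Uh U])
  then have "(U * Uh) $$ (i,j) = (if i = j then 1 else 0)" using i j by simp
  moreover have "(U * Uh) $$ (i,j) = (\<Sum>k<n. u k $ i * cnj (u k $ j))"
    using i j by (subst mm_entry[OF U Uh]) (auto simp: U_def Uh_def)
  ultimately show ?thesis by simp
qed

lemma spectral_entries:
  assumes A: "A \<in> carrier_mat n n" and ob: "orthonormal_basis n u"
    and ev: "\<forall>k<n. A *\<^sub>v u k = complex_of_real (l k) \<cdot>\<^sub>v u k"
    and i: "i < n" and j: "j < n"
  shows "A $$ (i,j) = (\<Sum>k<n. complex_of_real (l k) * u k $ i * cnj (u k $ j))"
proof -
  have uc: "u k \<in> carrier_vec n" if "k < n" for k using ob that unfolding orthonormal_basis_def by auto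
  have "(\<Sum>m<n. A $$ (i,m) * (if m = j then 1 else 0)) = (\<Sum>m<n. if m = j then A $$ (i,j) else 0)"
    by (rule sum.cong) auto
  then have "A $$ (i,j) = (\<Sum>m<n. A $$ (i,m) * (if m = j then 1 else 0))" using j by simp
  also have "\<dots> = (\<Sum>m<n. A $$ (i,m) * (\<Sum>k<n. u k $ m * cnj (u k $ j)))"
    by (intro sum.cong refl) (simp add: onb_complete[OF ob _ j])
  also have "\<dots> = (\<Sum>k<n. (\<Sum>m<n. A $$ (i,m) * u k $ m) * cnj (u k $ j))"
    by (simp add: sum_distrib_left sum_distrib_right mult.assoc) (rule sum.swap)
  also have "\<dots> = (\<Sum>k<n. (A *\<^sub>v u k) $ i * cnj (u k $ j))"
    by (intro sum.cong refl) (simp add: mv_entry[OF A uc i])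
  also have "\<dots> = (\<Sum>k<n. complex_of_real (l k) * u k $ i * cnj (u k $ j))"
  proof (intro sum.cong refl)
    fix k assume k: "k \<in> {..<n}"
    then have "dim_vec (u k) = n" using uc by auto
    then show "(A *\<^sub>v u k) $ i * cnj (u k $ j) = complex_of_real (l k) * u k $ i * cnj (u k $ j)"
      using ev k i by simp
  qed
  finally show ?thesis .
qed


definition sform :: "nat \<Rightarrow> complex mat \<Rightarrow> 'k set \<Rightarrow> ('k \<Rightarrow> real) \<Rightarrow> ('k \<Rightarrow> nat \<Rightarrow> complex) \<Rightarrow> bool" where
  "sform n M K c w \<longleftrightarrow> M \<in> carrier_mat n n \<and> finite K \<and> (\<forall>k\<in>K. c k \<ge> 0) \<and>
     (\<forall>i<n. \<forall>j<n. M $$ (i,j) = (\<Sum>k\<in>K. complex_of_real (c k) * w k i * cnj (w k j)))"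

lemma sform_mv:
  assumes sf: "sform n M K c w" and v: "v \<in> carrier_vec n" and i: "i < n"
  shows "(M *\<^sub>v v) $ i = (\<Sum>k\<in>K. complex_of_real (c k) * w k i * (\<Sum>j<n. cnj (w k j) * v $ j))"
proof -
  have M: "M \<in> carrier_mat n n" using sf by (simp add: sform_def)
  have "(M *\<^sub>v v) $ i = (\<Sum>j<n. M $$ (i,j) * v $ j)" by (rule mv_entry[OF M v i])
  also have "\<dots> = (\<Sum>j<n. (\<Sum>k\<in>K. complex_of_real (c k) * w k i * cnj (w k j)) * v $ j)"
    using sf i by (intro sum.cong refl) (simp add: sform_def)
  also have "\<dots> = (\<Sum>j<n. \<Sum>k\<in>K. complex_of_real (c k) * w k i * (cnj (w k j) * v $ j))"
    by (simp add: sum_distrib_right mult.assoc)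
  also have "\<dots> = (\<Sum>k\<in>K. \<Sum>j<n. complex_of_real (c k) * w k i * (cnj (w k j) * v $ j))"
    by (rule sum.swap)
  also have "\<dots> = (\<Sum>k\<in>K. complex_of_real (c k) * w k i * (\<Sum>j<n. cnj (w k j) * v $ j))"
    by (simp add: sum_distrib_left)
  finally show ?thesis .
qed

lemma sform_quad:
  assumes sf: "sform n M K c w" and v: "v \<in> carrier_vec n"
  shows "ipd n v (M *\<^sub>v v) = complex_of_real (\<Sum>k\<in>K. c k * (cmod (\<Sum>j<n. cnj (w k j) * v $ j))\<^sup>2)"
proof -
  define g where "g k = (\<Sum>j<n. cnj (w k j) * v $ j)" for k
  have "ipd n v (M *\<^sub>v v) = (\<Sum>i<n. cnj (v $ i) * (\<Sum>k\<in>K. complex_of_real (c k) * w k i * g k))"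
    unfolding ipd_def g_def by (intro sum.cong refl) (simp add: sform_mv[OF sf v])
  also have "\<dots> = (\<Sum>i<n. \<Sum>k\<in>K. complex_of_real (c k) * (cnj (v $ i) * w k i) * g k)"
    by (simp add: sum_distrib_left mult.assoc mult.left_commute)
  also have "\<dots> = (\<Sum>k\<in>K. \<Sum>i<n. complex_of_real (c k) * (cnj (v $ i) * w k i) * g k)"
    by (rule sum.swap)
  also have "\<dots> = (\<Sum>k\<in>K. complex_of_real (c k) * (\<Sum>i<n. cnj (v $ i) * w k i) * g k)"
    by (simp add: sum_distrib_left sum_distrib_right)
  also have "\<dots> = (\<Sum>k\<in>K. complex_of_real (c k) * (cnj (g k) * g k))"
  proof (intro sum.cong refl)
    fix k
    have "(\<Sum>i<n. cnj (v $ i) * w k i) = cnj (g k)" unfolding g_def by (simp add: mult.commute)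
    then show "complex_of_real (c k) * (\<Sum>i<n. cnj (v $ i) * w k i) * g k = complex_of_real (c k) * (cnj (g k) * g k)"
      by simp
  qed
  also have "\<dots> = complex_of_real (\<Sum>k\<in>K. c k * (cmod (g k))\<^sup>2)"
    unfolding of_real_sum
    by (intro sum.cong refl) (simp add: complex_norm_square mult.commute del: of_real_power)
  finally show ?thesis unfolding g_def .
qed

lemma sform_psd:
  assumes sf: "sform n M K c w"
  shows "psd_mat n M"
proof -
  have M: "M \<in> carrier_mat n n" and fin: "finite K" and c: "\<forall>k\<in>K. c k \<ge> 0"
    using sf by (auto simp: sform_def)
  have "adj M = M"
  proof (rule eq_matI)
    fix i j assume i: "i < dim_row M" and j: "j < dim_col M"
    have "adj M $$ (i,j) = cnj (M $$ (j,i))" using i j M by (simp add: adj_entry)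
    also have "\<dots> = M $$ (i,j)" using sf i j M by (simp add: sform_def mult.commute mult.left_commute)
    finally show "adj M $$ (i,j) = M $$ (i,j)" .
  qed (use M in auto)
  then have "hermitian_mat n M" using M by (simp add: hermitian_mat_def)
  moreover have "(\<Sum>i<n. cnj (v $ i) * (M *\<^sub>v v) $ i) \<ge> 0" if v: "v \<in> carrier_vec n" for v
  proof -
    have "(\<Sum>i<n. cnj (v $ i) * (M *\<^sub>v v) $ i) = ipd n v (M *\<^sub>v v)" by (simp add: ipd_def)
    also have "\<dots> = complex_of_real (\<Sum>k\<in>K. c k * (cmod (\<Sum>j<n. cnj (w k j) * v $ j))\<^sup>2)"
      by (rule sform_quad[OF sf v])
    finally have eq: "(\<Sum>i<n. cnj (v $ i) * (M *\<^sub>v v) $ i) = complex_of_real (\<Sum>k\<in>K. c k * (cmod (\<Sum>j<n. cnj (w k j) * v $ j))\<^sup>2)" .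
    have "(\<Sum>k\<in>K. c k * (cmod (\<Sum>j<n. cnj (w k j) * v $ j))\<^sup>2) \<ge> 0"
      using c by (intro sum_nonneg) auto
    then show ?thesis unfolding eq by (simp add: less_eq_complex_def)
  qed
  ultimately show ?thesis by (simp add: psd_mat_def)
qed

lemma psd_herm: "psd_mat n M \<Longrightarrow> hermitian_mat n M"
  by (simp add: psd_mat_def)

lemma psd_carrier: "psd_mat n M \<Longrightarrow> M \<in> carrier_mat n n"
  by (simp add: psd_mat_def hermitian_mat_def)

lemma psd_quad_nonneg: "psd_mat n M \<Longrightarrow> v \<in> carrier_vec n \<Longrightarrow> ipd n v (M *\<^sub>v v) \<ge> 0"
  by (simp add: psd_mat_def ipd_def)

lemma psd_sform:
  assumes P: "psd_mat n M"
  shows "\<exists>u l. orthonormal_basis n u \<and> (\<forall>k<n. M *\<^sub>v u k = complex_of_real (l k) \<cdot>\<^sub>v u k)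
     \<and> sform n M {..<n} l (\<lambda>k i. u k $ i)"
proof -
  obtain u l where ob: "orthonormal_basis n u" and ev: "\<forall>k<n. M *\<^sub>v u k = complex_of_real (l k) \<cdot>\<^sub>v u k"
    using spectral[OF psd_herm[OF P]] by blast
  have M: "M \<in> carrier_mat n n" by (rule psd_carrier[OF P])
  have uc: "u k \<in> carrier_vec n" if "k < n" for k using ob that by (simp add: orthonormal_basis_def)
  have l: "l k \<ge> 0" if k: "k < n" for k
  proof -
    have "ipd n (u k) (M *\<^sub>v u k) = complex_of_real (l k) * ipd n (u k) (u k)"
      using ev k uc[OF k] by (simp add: ipd_smult_right)
    also have "ipd n (u k) (u k) = 1" using ob k by (simp add: orthonormal_basis_def ipd_def)
    finally have "complex_of_real (l k) \<ge> 0" using psd_quad_nonneg[OF P uc[OF k]] by simp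
    then show ?thesis by (simp add: less_eq_complex_def)
  qed
  have "sform n M {..<n} l (\<lambda>k i. u k $ i)"
    unfolding sform_def using M l spectral_entries[OF M ob ev] by auto
  then show ?thesis using ob ev by blast
qed

lemma psd_quad_zero:
  assumes P: "psd_mat n M" and v: "v \<in> carrier_vec n" and z: "ipd n v (M *\<^sub>v v) = 0"
  shows "M *\<^sub>v v = 0\<^sub>v n"
proof -
  obtain u l where sf: "sform n M {..<n} l (\<lambda>k i. u k $ i)" using psd_sform[OF P] by blast
  have M: "M \<in> carrier_mat n n" by (rule psd_carrier[OF P])
  define g where "g k = (\<Sum>j<n. cnj (u k $ j) * v $ j)" for k
  have l: "\<forall>k\<in>{..<n}. l k \<ge> 0" using sf by (simp add: sform_def)
  have "complex_of_real (\<Sum>k<n. l k * (cmod (g k))\<^sup>2) = 0"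
    using sform_quad[OF sf v] z unfolding g_def by simp
  then have "(\<Sum>k<n. l k * (cmod (g k))\<^sup>2) = 0" by (simp only: of_real_eq_0_iff)
  then have each: "\<forall>k\<in>{..<n}. l k * (cmod (g k))\<^sup>2 = 0"
    using l by (subst sum_nonneg_eq_0_iff[symmetric]) auto
  have zk: "complex_of_real (l k) * g k = 0" if "k < n" for k
    using each that by auto
  show ?thesis
  proof (rule eq_vecI)
    fix i assume i: "i < dim_vec (0\<^sub>v n :: complex vec)"
    then have "(M *\<^sub>v v) $ i = (\<Sum>k<n. complex_of_real (l k) * u k $ i * g k)"
      using sform_mv[OF sf v] unfolding g_def by simp
    also have "\<dots> = 0" using zk by (intro sum.neutral) (auto simp: mult.commute mult.left_commute)
    finally show "(M *\<^sub>v v) $ i = 0\<^sub>v n $ i" using i by simp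
  qed (use M in simp)
qed


lemma sum_swap3:
  "(\<Sum>m\<in>A. \<Sum>k\<in>B. \<Sum>k'\<in>C. f m k k') = (\<Sum>k\<in>B. \<Sum>k'\<in>C. \<Sum>m\<in>A. f m k k')"
proof -
  have "(\<Sum>m\<in>A. \<Sum>k\<in>B. \<Sum>k'\<in>C. f m k k') = (\<Sum>k\<in>B. \<Sum>m\<in>A. \<Sum>k'\<in>C. f m k k')"
    by (rule sum.swap)
  also have "\<dots> = (\<Sum>k\<in>B. \<Sum>k'\<in>C. \<Sum>m\<in>A. f m k k')"
    by (rule sum.cong[OF refl], rule sum.swap)
  finally show ?thesis .
qed

lemma onb_prod:
  assumes ob: "orthonormal_basis n u" and i: "i < n" and j: "j < n"
  shows "(\<Sum>m<n. (\<Sum>k<n. a k * u k $ i * cnj (u k $ m)) * (\<Sum>k<n. b k * u k $ m * cnj (u k $ j)))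
       = (\<Sum>k<n. a k * b k * u k $ i * cnj (u k $ j))"
proof -
  have "(\<Sum>m<n. (\<Sum>k<n. a k * u k $ i * cnj (u k $ m)) * (\<Sum>k<n. b k * u k $ m * cnj (u k $ j)))
      = (\<Sum>m<n. \<Sum>k<n. \<Sum>k'<n. (a k * b k' * u k $ i * cnj (u k' $ j)) * (cnj (u k $ m) * u k' $ m))"
    unfolding sum_product by (intro sum.cong refl) (simp add: ac_simps)
  also have "\<dots> = (\<Sum>k<n. \<Sum>k'<n. \<Sum>m<n. (a k * b k' * u k $ i * cnj (u k' $ j)) * (cnj (u k $ m) * u k' $ m))"
    by (rule sum_swap3)
  also have "\<dots> = (\<Sum>k<n. \<Sum>k'<n. (a k * b k' * u k $ i * cnj (u k' $ j)) * (if k = k' then 1 else 0))"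
  proof (intro sum.cong refl)
    fix k k' assume k: "k \<in> {..<n}" and k': "k' \<in> {..<n}"
    have "(\<Sum>m<n. cnj (u k $ m) * u k' $ m) = (if k = k' then 1 else 0)"
      using ob k k' by (simp add: orthonormal_basis_def)
    then show "(\<Sum>m<n. (a k * b k' * u k $ i * cnj (u k' $ j)) * (cnj (u k $ m) * u k' $ m))
        = (a k * b k' * u k $ i * cnj (u k' $ j)) * (if k = k' then 1 else 0)"
      by (simp add: sum_distrib_left[symmetric])
  qed
  also have "\<dots> = (\<Sum>k<n. a k * b k * u k $ i * cnj (u k $ j))"
    by (intro sum.cong refl) (simp add: if_distrib cong: if_cong)
  finally show ?thesis .
qed

lemma psd_sqrt_exists:
  assumes P: "psd_mat n A"
  shows "\<exists>S. psd_mat n S \<and> S * S = A"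
proof -
  obtain u l where ob: "orthonormal_basis n u" and sf: "sform n A {..<n} l (\<lambda>k i. u k $ i)"
    using psd_sform[OF P] by blast
  have l: "\<And>k. k < n \<Longrightarrow> l k \<ge> 0" using sf by (auto simp: sform_def)
  define S where "S = mat n n (\<lambda>(i,j). \<Sum>k<n. complex_of_real (sqrt (l k)) * u k $ i * cnj (u k $ j))"
  have S: "S \<in> carrier_mat n n" unfolding S_def by simp
  have sfS: "sform n S {..<n} (\<lambda>k. sqrt (l k)) (\<lambda>k i. u k $ i)"
    unfolding sform_def S_def using l by auto
  have "S * S = A"
  proof (rule eq_matI)
    fix i j assume i: "i < dim_row A" and j: "j < dim_col A"
    have A: "A \<in> carrier_mat n n" using sf by (simp add: sform_def)
    then have i: "i < n" and j: "j < n" using i j by auto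
    have "(S * S) $$ (i,j) = (\<Sum>m<n. S $$ (i,m) * S $$ (m,j))" by (rule mm_entry[OF S S i j])
    also have "\<dots> = (\<Sum>m<n. (\<Sum>k<n. complex_of_real (sqrt (l k)) * u k $ i * cnj (u k $ m))
        * (\<Sum>k<n. complex_of_real (sqrt (l k)) * u k $ m * cnj (u k $ j)))"
      using i j by (intro sum.cong refl) (simp add: S_def)
    also have "\<dots> = (\<Sum>k<n. complex_of_real (sqrt (l k)) * complex_of_real (sqrt (l k)) * u k $ i * cnj (u k $ j))"
      by (rule onb_prod[OF ob i j])
    also have "\<dots> = (\<Sum>k<n. complex_of_real (l k) * u k $ i * cnj (u k $ j))"
    proof (intro sum.cong refl)
      fix k assume "k \<in> {..<n}"
      then have "sqrt (l k) * sqrt (l k) = l k" using l by simp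
      then have "complex_of_real (sqrt (l k)) * complex_of_real (sqrt (l k)) = complex_of_real (l k)"
        by (metis of_real_mult)
      then show "complex_of_real (sqrt (l k)) * complex_of_real (sqrt (l k)) * u k $ i * cnj (u k $ j)
          = complex_of_real (l k) * u k $ i * cnj (u k $ j)" by simp
    qed
    also have "\<dots> = A $$ (i,j)" using sf i j by (simp add: sform_def)
    finally show "(S * S) $$ (i,j) = A $$ (i,j)" .
  qed (use S sf in \<open>auto simp: sform_def\<close>)
  then show ?thesis using sform_psd[OF sfS] by blast
qed

lemma psd_sqrt_unique:
  assumes PS: "psd_mat n S" and PT: "psd_mat n T" and eq: "S * S = T * T"
  shows "S = T"
proof -
  have S: "S \<in> carrier_mat n n" and T: "T \<in> carrier_mat n n" using PS PT by (auto simp: psd_carrier)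
  define H where "H = S - T"
  have Hc: "H \<in> carrier_mat n n" unfolding H_def using S T by (auto intro: minus_carrier_mat)
  have HH: "hermitian_mat n H"
  proof -
    have "adj H = H"
    proof (rule eq_matI)
      fix i j assume i: "i < dim_row H" and j: "j < dim_col H"
      then have i: "i < n" and j: "j < n" using Hc by auto
      have "adj H $$ (i,j) = cnj (H $$ (j,i))" using i j Hc by (simp add: adj_entry)
      also have "\<dots> = cnj (S $$ (j,i)) - cnj (T $$ (j,i))" using i j S T by (simp add: H_def)
      also have "\<dots> = S $$ (i,j) - T $$ (i,j)"
        using herm_entry[OF psd_herm[OF PS] j i] herm_entry[OF psd_herm[OF PT] j i] by simp
      also have "\<dots> = H $$ (i,j)" using i j S T by (simp add: H_def)
      finally show "adj H $$ (i,j) = H $$ (i,j)" .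
    qed (use Hc in auto)
    then show ?thesis using Hc by (simp add: hermitian_mat_def)
  qed
  obtain u l where ob: "orthonormal_basis n u" and ev: "\<forall>k<n. H *\<^sub>v u k = complex_of_real (l k) \<cdot>\<^sub>v u k"
    using spectral[OF HH] by blast
  have l0: "l k = 0" if k: "k < n" for k
  proof (rule ccontr)
    assume lk: "l k \<noteq> 0"
    define x where "x = u k"
    have x: "x \<in> carrier_vec n" using ob k unfolding x_def orthonormal_basis_def by auto
    have xx: "ipd n x x = 1" using ob k unfolding x_def orthonormal_basis_def ipd_def by auto
    have Hx: "H *\<^sub>v x = complex_of_real (l k) \<cdot>\<^sub>v x" using ev k unfolding x_def by auto
    have Sx: "S *\<^sub>v x \<in> carrier_vec n" and Tx: "T *\<^sub>v x \<in> carrier_vec n" using S T x by auto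
    have HxST: "H *\<^sub>v x = S *\<^sub>v x - T *\<^sub>v x" unfolding H_def by (rule minus_mult_distrib_mat_vec[OF S T x])
    have 1: "S *\<^sub>v (H *\<^sub>v x) = S *\<^sub>v (S *\<^sub>v x) - S *\<^sub>v (T *\<^sub>v x)"
      unfolding HxST by (rule mult_minus_distrib_mat_vec[OF S Sx Tx])
    have 2: "H *\<^sub>v (T *\<^sub>v x) = S *\<^sub>v (T *\<^sub>v x) - T *\<^sub>v (T *\<^sub>v x)"
      unfolding H_def by (rule minus_mult_distrib_mat_vec[OF S T Tx])
    have SSx: "S *\<^sub>v (S *\<^sub>v x) = T *\<^sub>v (T *\<^sub>v x)"
      using eq assoc_mult_mat_vec[OF S S x] assoc_mult_mat_vec[OF T T x] by simp
    have "ipd n x (S *\<^sub>v (H *\<^sub>v x)) + ipd n x (H *\<^sub>v (T *\<^sub>v x)) = 0"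
      unfolding 1 2 using S T Sx Tx SSx by (simp add: ipd_minus)
    moreover have "ipd n x (S *\<^sub>v (H *\<^sub>v x)) = complex_of_real (l k) * ipd n x (S *\<^sub>v x)"
      unfolding Hx using mult_mat_vec[OF S x] x S by (simp add: ipd_smult_right)
    moreover have "ipd n x (H *\<^sub>v (T *\<^sub>v x)) = complex_of_real (l k) * ipd n x (T *\<^sub>v x)"
      using herm_ipd[OF HH x Tx] Hx x by (simp add: ipd_smult_left)
    ultimately have "complex_of_real (l k) * (ipd n x (S *\<^sub>v x) + ipd n x (T *\<^sub>v x)) = 0"
      by (simp add: distrib_left)
    then have sum0: "ipd n x (S *\<^sub>v x) + ipd n x (T *\<^sub>v x) = 0" using lk by simp
    have n1: "ipd n x (S *\<^sub>v x) \<ge> 0" by (rule psd_quad_nonneg[OF PS x])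
    have n2: "ipd n x (T *\<^sub>v x) \<ge> 0" by (rule psd_quad_nonneg[OF PT x])
    have z1: "ipd n x (S *\<^sub>v x) = 0" and z2: "ipd n x (T *\<^sub>v x) = 0"
      using sum0 n1 n2 by (simp_all add: add_nonneg_eq_0_iff)
    have "S *\<^sub>v x = 0\<^sub>v n" by (rule psd_quad_zero[OF PS x z1])
    moreover have "T *\<^sub>v x = 0\<^sub>v n" by (rule psd_quad_zero[OF PT x z2])
    ultimately have "H *\<^sub>v x = 0\<^sub>v n" unfolding HxST by simp
    then have "complex_of_real (l k) \<cdot>\<^sub>v x = 0\<^sub>v n" using Hx by simp
    then have "ipd n x (complex_of_real (l k) \<cdot>\<^sub>v x) = 0" by (simp add: ipd_def)
    then have "complex_of_real (l k) * ipd n x x = 0" using x by (simp add: ipd_smult_right)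
    then show False using xx lk by simp
  qed
  show ?thesis
  proof (rule eq_matI)
    fix i j assume i: "i < dim_row T" and j: "j < dim_col T"
    then have i: "i < n" and j: "j < n" using T by auto
    have "H $$ (i,j) = (\<Sum>k<n. complex_of_real (l k) * u k $ i * cnj (u k $ j))"
      by (rule spectral_entries[OF Hc ob ev i j])
    also have "\<dots> = 0" using l0 by simp
    finally have "H $$ (i,j) = 0" .
    then show "S $$ (i,j) = T $$ (i,j)" using i j S T by (simp add: H_def)
  qed (use S T in auto)
qed

lemma msqrt_eq:
  assumes "psd_mat n S" "S * S = A"
  shows "msqrt n A = S"
  unfolding msqrt_def
proof (rule the_equality)
  show "psd_mat n S \<and> S * S = A" using assms by simp
  fix T assume "psd_mat n T \<and> T * T = A"
  then show "T = S" using assms psd_sqrt_unique by metis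
qed

lemma msqrt_props:
  assumes "psd_mat n A"
  shows "psd_mat n (msqrt n A)" "msqrt n A * msqrt n A = A"
proof -
  obtain S where "psd_mat n S" "S * S = A" using psd_sqrt_exists[OF assms] by blast
  then show "psd_mat n (msqrt n A)" "msqrt n A * msqrt n A = A" using msqrt_eq by auto
qed


declare index_mult_mat(1)[simp del]

lemma sum_split:
  fixes m n :: nat
  shows "(\<Sum>i<m*n. f i) = (\<Sum>x<m. \<Sum>y<n. f (x*n + y))"
proof -
  have "(\<Sum>i<m*n. f i) = (\<Sum>x<m. \<Sum>i\<in>{x*n..<x*n+n}. f i)" by (simp only: sum.nat_group)
  also have "\<dots> = (\<Sum>x<m. \<Sum>y<n. f (x*n + y))"
  proof (rule sum.cong[OF refl])
    fix x
    show "(\<Sum>i\<in>{x*n..<x*n+n}. f i) = (\<Sum>y<n. f (x*n + y))"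
      using sum.shift_bounds_nat_ivl[of f 0 "x*n" n] by (simp add: atLeast0LessThan add.commute)
  qed
  finally show ?thesis .
qed

definition idx :: "nat \<Rightarrow> nat \<Rightarrow> nat \<Rightarrow> nat \<Rightarrow> nat \<Rightarrow> nat" where
  "idx d d4 x p y = (x * d + p) * d4 + y"

lemma sum_idx3:
  fixes d1 d d4 :: nat
  shows "(\<Sum>i<d1*d*d4. f i) = (\<Sum>x<d1. \<Sum>p<d. \<Sum>y<d4. f (idx d d4 x p y))"
  unfolding idx_def by (simp add: sum_split)

lemma idx_less:
  assumes "x < d1" "p < d" "y < d4"
  shows "idx d d4 x p y < d1 * d * d4"
proof -
  have "x * d + p < d1 * d"
  proof -
    have "x * d + p < x * d + d" using assms by simp
    also have "\<dots> = (x + 1) * d" by simp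
    also have "\<dots> \<le> d1 * d" using assms by (intro mult_right_mono) auto
    finally show ?thesis .
  qed
  then have "(x * d + p) * d4 + y < (x * d + p) * d4 + d4" using assms by simp
  also have "\<dots> = (x * d + p + 1) * d4" by simp
  also have "\<dots> \<le> d1 * d * d4" using \<open>x * d + p < d1 * d\<close> by (intro mult_right_mono) auto
  finally show ?thesis unfolding idx_def .
qed

lemma idx_decomp:
  assumes "i < d1 * d * d4"
  shows "\<exists>x p y. x < d1 \<and> p < d \<and> y < d4 \<and> i = idx d d4 x p y"
proof -
  have d4: "d4 > 0" using assms by (cases d4) auto
  have d: "d > 0" using assms by (cases d) auto
  define y where "y = i mod d4"
  define r where "r = i div d4"
  define p where "p = r mod d"
  define x where "x = r div d"
  have "r < d1 * d" unfolding r_def using assms d4 by (simp add: less_mult_imp_div_less)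
  then have "x < d1" unfolding x_def using d by (simp add: less_mult_imp_div_less)
  moreover have "p < d" unfolding p_def using d by simp
  moreover have "y < d4" unfolding y_def using d4 by simp
  moreover have "i = idx d d4 x p y" unfolding idx_def x_def p_def y_def r_def
    by (metis div_mult_mod_eq mult.commute)
  ultimately show ?thesis by blast
qed

lemma idx_inj:
  assumes "p < d" "y < d4" "p' < d" "y' < d4" "idx d d4 x p y = idx d d4 x' p' y'"
  shows "x = x' \<and> p = p' \<and> y = y'"
proof -
  have d4: "d4 > 0" and d: "d > 0" using assms by auto
  have "y = y'" using assms(5) assms unfolding idx_def
    by (metis mod_mult_self3 mod_less)
  moreover have "x * d + p = x' * d + p'" using assms(5) assms d4 unfolding idx_def
    by (metis add_right_cancel calculation mult_right_cancel not_less0)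
  then have "p = p'" using assms by (metis mod_mult_self3 mod_less)
  moreover have "x = x'" using \<open>x * d + p = x' * d + p'\<close> calculation d by simp
  ultimately show ?thesis by simp
qed

definition Kmat :: "nat \<Rightarrow> nat \<Rightarrow> complex vec \<Rightarrow> complex mat" where
  "Kmat d1 d4 v = kron (kron (1\<^sub>m d1) (proj v)) (1\<^sub>m d4)"

lemma Kmat_carrier: "v \<in> carrier_vec d \<Longrightarrow> Kmat d1 d4 v \<in> carrier_mat (d1*d*d4) (d1*d*d4)"
  by (simp add: Kmat_def kron_def proj_def)

lemma Kmat_entry:
  assumes v: "v \<in> carrier_vec d" and "x < d1" "p < d" "y < d4" "x' < d1" "p' < d" "y' < d4"
  shows "Kmat d1 d4 v $$ (idx d d4 x p y, idx d d4 x' p' y')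
       = (if x = x' \<and> y = y' then v $ p * cnj (v $ p') else 0)"
proof -
  have i1: "idx d d4 x p y < d1*d*d4" and i2: "idx d d4 x' p' y' < d1*d*d4"
    using assms by (auto intro: idx_less)
  have d4: "d4 > 0" and d: "d > 0" using assms by auto
  have a1: "(x * d + p) < d1 * d" using idx_less[of x d1 p d 0 1] assms by (simp add: idx_def)
  have a2: "(x' * d + p') < d1 * d" using idx_less[of x' d1 p' d 0 1] assms by (simp add: idx_def)
  show ?thesis using v i1 i2 a1 a2 assms d d4
    by (simp add: Kmat_def kron_def proj_def idx_def)
qed

lemma collapse3:
  fixes d1 d d4 :: nat
  assumes x: "x < d1" and y: "y < d4"
  shows "(\<Sum>x1<d1. \<Sum>p1<d. \<Sum>y1<d4. if x = x1 \<and> y = y1 then G x1 p1 y1 else 0) = (\<Sum>p1<d. G x p1 y)"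
proof -
  have "(\<Sum>x1<d1. \<Sum>p1<d. \<Sum>y1<d4. if x = x1 \<and> y = y1 then G x1 p1 y1 else 0)
      = (\<Sum>x1<d1. \<Sum>p1<d. if x = x1 then G x1 p1 y else 0)"
  proof (intro sum.cong refl)
    fix x1 p1
    have "(\<Sum>y1<d4. if x = x1 \<and> y = y1 then G x1 p1 y1 else 0) = (\<Sum>y1<d4. if y = y1 then (if x = x1 then G x1 p1 y1 else 0) else 0)"
      by (intro sum.cong refl) auto
    also have "\<dots> = (if x = x1 then G x1 p1 y else 0)" using y by (simp add: sum.delta)
    finally show "(\<Sum>y1<d4. if x = x1 \<and> y = y1 then G x1 p1 y1 else 0) = (if x = x1 then G x1 p1 y else 0)" .
  qed
  also have "\<dots> = (\<Sum>x1<d1. if x = x1 then (\<Sum>p1<d. G x1 p1 y) else 0)"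
    by (intro sum.cong refl) auto
  also have "\<dots> = (\<Sum>p1<d. G x p1 y)" using x by (simp add: sum.delta)
  finally show ?thesis .
qed

lemma Kmat_mult_left:
  assumes v: "v \<in> carrier_vec d" and X: "X \<in> carrier_mat (d1*d*d4) m" and t: "t < m"
    and x: "x < d1" and p: "p < d" and y: "y < d4"
  shows "(Kmat d1 d4 v * X) $$ (idx d d4 x p y, t) = (\<Sum>p1<d. v $ p * cnj (v $ p1) * X $$ (idx d d4 x p1 y, t))"
proof -
  have K: "Kmat d1 d4 v \<in> carrier_mat (d1*d*d4) (d1*d*d4)" by (rule Kmat_carrier[OF v])
  have "(Kmat d1 d4 v * X) $$ (idx d d4 x p y, t) = (\<Sum>s<d1*d*d4. Kmat d1 d4 v $$ (idx d d4 x p y, s) * X $$ (s, t))"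
    by (rule mm_entry[OF K X idx_less[OF x p y] t])
  also have "\<dots> = (\<Sum>x1<d1. \<Sum>p1<d. \<Sum>y1<d4. Kmat d1 d4 v $$ (idx d d4 x p y, idx d d4 x1 p1 y1) * X $$ (idx d d4 x1 p1 y1, t))"
    by (rule sum_idx3)
  also have "\<dots> = (\<Sum>x1<d1. \<Sum>p1<d. \<Sum>y1<d4. if x = x1 \<and> y = y1 then v $ p * cnj (v $ p1) * X $$ (idx d d4 x1 p1 y1, t) else 0)"
    by (intro sum.cong refl) (simp add: Kmat_entry[OF v x p y])
  also have "\<dots> = (\<Sum>p1<d. v $ p * cnj (v $ p1) * X $$ (idx d d4 x p1 y, t))"
    by (rule collapse3[OF x y])
  finally show ?thesis .
qed

lemma Kmat_mult_right:
  assumes v: "v \<in> carrier_vec d" and X: "X \<in> carrier_mat m (d1*d*d4)" and s: "s < m"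
    and x: "x < d1" and q: "q < d" and y: "y < d4"
  shows "(X * Kmat d1 d4 v) $$ (s, idx d d4 x q y) = (\<Sum>q1<d. X $$ (s, idx d d4 x q1 y) * (v $ q1 * cnj (v $ q)))"
proof -
  have K: "Kmat d1 d4 v \<in> carrier_mat (d1*d*d4) (d1*d*d4)" by (rule Kmat_carrier[OF v])
  have "(X * Kmat d1 d4 v) $$ (s, idx d d4 x q y) = (\<Sum>t<d1*d*d4. X $$ (s, t) * Kmat d1 d4 v $$ (t, idx d d4 x q y))"
    by (rule mm_entry[OF X K s idx_less[OF x q y]])
  also have "\<dots> = (\<Sum>x1<d1. \<Sum>q1<d. \<Sum>y1<d4. X $$ (s, idx d d4 x1 q1 y1) * Kmat d1 d4 v $$ (idx d d4 x1 q1 y1, idx d d4 x q y))"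
    by (rule sum_idx3)
  also have "\<dots> = (\<Sum>x1<d1. \<Sum>q1<d. \<Sum>y1<d4. if x = x1 \<and> y = y1 then X $$ (s, idx d d4 x1 q1 y1) * (v $ q1 * cnj (v $ q)) else 0)"
    by (intro sum.cong refl) (auto simp add: Kmat_entry[OF v _ _ _ x q y])
  also have "\<dots> = (\<Sum>q1<d. X $$ (s, idx d d4 x q1 y) * (v $ q1 * cnj (v $ q)))"
    by (rule collapse3[OF x y])
  finally show ?thesis .
qed

definition cf :: "nat \<Rightarrow> nat \<Rightarrow> complex vec \<Rightarrow> complex mat \<Rightarrow> nat \<Rightarrow> nat \<Rightarrow> nat \<Rightarrow> nat \<Rightarrow> complex" where
  "cf d d4 v X x y x' y' = (\<Sum>p1<d. \<Sum>q1<d. cnj (v $ p1) * X $$ (idx d d4 x p1 y, idx d d4 x' q1 y') * v $ q1)"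

lemma KXK_entry:
  assumes v: "v \<in> carrier_vec d" and X: "X \<in> carrier_mat (d1*d*d4) (d1*d*d4)"
    and x: "x < d1" and p: "p < d" and y: "y < d4" and x': "x' < d1" and q: "q < d" and y': "y' < d4"
  shows "(Kmat d1 d4 v * X * Kmat d1 d4 v) $$ (idx d d4 x p y, idx d d4 x' q y')
       = v $ p * cnj (v $ q) * cf d d4 v X x y x' y'"
proof -
  have K: "Kmat d1 d4 v \<in> carrier_mat (d1*d*d4) (d1*d*d4)" by (rule Kmat_carrier[OF v])
  have KX: "Kmat d1 d4 v * X \<in> carrier_mat (d1*d*d4) (d1*d*d4)" using K X by simp
  have "(Kmat d1 d4 v * X * Kmat d1 d4 v) $$ (idx d d4 x p y, idx d d4 x' q y')
      = (\<Sum>q1<d. (Kmat d1 d4 v * X) $$ (idx d d4 x p y, idx d d4 x' q1 y') * (v $ q1 * cnj (v $ q)))"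
    by (rule Kmat_mult_right[OF v KX idx_less[OF x p y] x' q y'])
  also have "\<dots> = (\<Sum>q1<d. (\<Sum>p1<d. v $ p * cnj (v $ p1) * X $$ (idx d d4 x p1 y, idx d d4 x' q1 y')) * (v $ q1 * cnj (v $ q)))"
    by (intro sum.cong refl) (simp add: Kmat_mult_left[OF v X idx_less[OF x' _ y'] x p y])
  also have "\<dots> = (\<Sum>q1<d. \<Sum>p1<d. v $ p * cnj (v $ q) * (cnj (v $ p1) * X $$ (idx d d4 x p1 y, idx d d4 x' q1 y') * v $ q1))"
    unfolding sum_distrib_right by (intro sum.cong refl) (simp add: ac_simps)
  also have "\<dots> = (\<Sum>p1<d. \<Sum>q1<d. v $ p * cnj (v $ q) * (cnj (v $ p1) * X $$ (idx d d4 x p1 y, idx d d4 x' q1 y') * v $ q1))"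
    by (rule sum.swap)
  also have "\<dots> = v $ p * cnj (v $ q) * cf d d4 v X x y x' y'"
    by (simp add: cf_def sum_distrib_left)
  finally show ?thesis .
qed

lemma meas_mid_carrier: "meas_mid d1 d d4 P X \<in> carrier_mat (d1*d*d4) (d1*d*d4)"
  by (simp add: meas_mid_def Let_def)

lemma meas_mid_entry:
  assumes ob: "orthonormal_basis d u" and P: "\<forall>k<d. P k = proj (u k)"
    and X: "X \<in> carrier_mat (d1*d*d4) (d1*d*d4)"
    and x: "x < d1" and p: "p < d" and y: "y < d4" and x': "x' < d1" and q: "q < d" and y': "y' < d4"
  shows "meas_mid d1 d d4 P X $$ (idx d d4 x p y, idx d d4 x' q y')
       = (\<Sum>k<d. u k $ p * cnj (u k $ q) * cf d d4 (u k) X x y x' y')"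
proof -
  have uc: "u k \<in> carrier_vec d" if "k < d" for k using ob that by (simp add: orthonormal_basis_def)
  have "meas_mid d1 d d4 P X $$ (idx d d4 x p y, idx d d4 x' q y')
     = (\<Sum>k<d. (Kmat d1 d4 (u k) * X * Kmat d1 d4 (u k)) $$ (idx d d4 x p y, idx d d4 x' q y'))"
    using idx_less[OF x p y] idx_less[OF x' q y'] P by (simp add: meas_mid_def Let_def Kmat_def)
  also have "\<dots> = (\<Sum>k<d. u k $ p * cnj (u k $ q) * cf d d4 (u k) X x y x' y')"
    by (intro sum.cong refl) (simp add: KXK_entry[OF uc X x p y x' q y'])
  finally show ?thesis .
qed


definition hip :: "complex mat \<Rightarrow> complex mat \<Rightarrow> complex" where
  "hip A B = (\<Sum>i<dim_row A. \<Sum>j<dim_col A. cnj (A $$ (i,j)) * B $$ (i,j))"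

definition gam :: "nat \<Rightarrow> complex vec \<Rightarrow> (nat \<Rightarrow> nat \<Rightarrow> complex) \<Rightarrow> complex" where
  "gam d v Y = (\<Sum>p<d. \<Sum>q<d. cnj (v $ p) * Y p q * v $ q)"

lemma G1:
  "(\<Sum>p<d. \<Sum>q<d. cnj (\<Sum>k<d. u k $ p * cnj (u k $ q) * a k) * Y p q)
   = (\<Sum>k<d. cnj (a k) * gam d (u k) Y)"
proof -
  have "(\<Sum>p<d. \<Sum>q<d. cnj (\<Sum>k<d. u k $ p * cnj (u k $ q) * a k) * Y p q)
      = (\<Sum>p<d. \<Sum>q<d. \<Sum>k<d. cnj (a k) * (cnj (u k $ p) * Y p q * u k $ q))"
    by (intro sum.cong refl) (simp add: sum_distrib_left sum_distrib_right ac_simps)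
  also have "\<dots> = (\<Sum>k<d. \<Sum>p<d. \<Sum>q<d. cnj (a k) * (cnj (u k $ p) * Y p q * u k $ q))"
    by (rule sum_swap3[symmetric])
  also have "\<dots> = (\<Sum>k<d. cnj (a k) * gam d (u k) Y)"
    by (simp add: gam_def sum_distrib_left)
  finally show ?thesis .
qed

lemma G2:
  assumes ob: "orthonormal_basis d u" and k: "k < d"
  shows "gam d (u k) (\<lambda>p q. \<Sum>l<d. u l $ p * cnj (u l $ q) * a l) = a k"
proof -
  have "gam d (u k) (\<lambda>p q. \<Sum>l<d. u l $ p * cnj (u l $ q) * a l)
      = (\<Sum>p<d. \<Sum>q<d. \<Sum>l<d. a l * ((cnj (u k $ p) * u l $ p) * (cnj (u l $ q) * u k $ q)))"
    unfolding gam_def by (intro sum.cong refl) (simp add: sum_distrib_left sum_distrib_right ac_simps)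
  also have "\<dots> = (\<Sum>l<d. \<Sum>p<d. \<Sum>q<d. a l * ((cnj (u k $ p) * u l $ p) * (cnj (u l $ q) * u k $ q)))"
    by (rule sum_swap3[symmetric])
  also have "\<dots> = (\<Sum>l<d. a l * ((\<Sum>p<d. cnj (u k $ p) * u l $ p) * (\<Sum>q<d. cnj (u l $ q) * u k $ q)))"
    by (intro sum.cong refl) (subst sum_product, simp only: sum_distrib_left)
  also have "\<dots> = (\<Sum>l<d. if l = k then a k else 0)"
  proof (intro sum.cong refl)
    fix l assume l: "l \<in> {..<d}"
    show "a l * ((\<Sum>p<d. cnj (u k $ p) * u l $ p) * (\<Sum>q<d. cnj (u l $ q) * u k $ q)) = (if l = k then a k else 0)"
      using ob k l by (auto simp: orthonormal_basis_def)
  qed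
  also have "\<dots> = a k" using k by simp
  finally show ?thesis .
qed

lemma sum_swap_inner:
  "(\<Sum>x\<in>A. \<Sum>p\<in>B. \<Sum>y\<in>C. f x p y) = (\<Sum>x\<in>A. \<Sum>y\<in>C. \<Sum>p\<in>B. f x p y)"
  by (rule sum.cong[OF refl], rule sum.swap)

lemma reorder6:
  "(\<Sum>x\<in>A. \<Sum>p\<in>B. \<Sum>y\<in>C. \<Sum>x'\<in>A'. \<Sum>q\<in>B'. \<Sum>y'\<in>C'. g x p y x' q y')
   = (\<Sum>x\<in>A. \<Sum>y\<in>C. \<Sum>x'\<in>A'. \<Sum>y'\<in>C'. \<Sum>p\<in>B. \<Sum>q\<in>B'. g x p y x' q y')"
proof -
  have "(\<Sum>x\<in>A. \<Sum>p\<in>B. \<Sum>y\<in>C. \<Sum>x'\<in>A'. \<Sum>q\<in>B'. \<Sum>y'\<in>C'. g x p y x' q y')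
     = (\<Sum>x\<in>A. \<Sum>y\<in>C. \<Sum>p\<in>B. \<Sum>x'\<in>A'. \<Sum>q\<in>B'. \<Sum>y'\<in>C'. g x p y x' q y')"
    by (rule sum_swap_inner)
  also have "\<dots> = (\<Sum>x\<in>A. \<Sum>y\<in>C. \<Sum>x'\<in>A'. \<Sum>p\<in>B. \<Sum>q\<in>B'. \<Sum>y'\<in>C'. g x p y x' q y')"
    by (rule sum.cong[OF refl], rule sum.cong[OF refl], rule sum.swap)
  also have "\<dots> = (\<Sum>x\<in>A. \<Sum>y\<in>C. \<Sum>x'\<in>A'. \<Sum>p\<in>B. \<Sum>y'\<in>C'. \<Sum>q\<in>B'. g x p y x' q y')"
    by (rule sum.cong[OF refl], rule sum.cong[OF refl], rule sum.cong[OF refl], rule sum.cong[OF refl], rule sum.swap)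
  also have "\<dots> = (\<Sum>x\<in>A. \<Sum>y\<in>C. \<Sum>x'\<in>A'. \<Sum>y'\<in>C'. \<Sum>p\<in>B. \<Sum>q\<in>B'. g x p y x' q y')"
    by (rule sum.cong[OF refl], rule sum.cong[OF refl], rule sum.cong[OF refl], rule sum.swap)
  finally show ?thesis .
qed

lemma hip_blocks:
  fixes d1 d d4 :: nat
  assumes A: "A \<in> carrier_mat (d1*d*d4) (d1*d*d4)"
  shows "hip A B = (\<Sum>x<d1. \<Sum>y<d4. \<Sum>x'<d1. \<Sum>y'<d4. \<Sum>p<d. \<Sum>q<d.
     cnj (A $$ (idx d d4 x p y, idx d d4 x' q y')) * B $$ (idx d d4 x p y, idx d d4 x' q y'))"
    (is "_ = ?rhs")
proof -
  have "hip A B = (\<Sum>i<d1*d*d4. \<Sum>j<d1*d*d4. cnj (A $$ (i,j)) * B $$ (i,j))"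
    using A by (simp add: hip_def)
  also have "\<dots> = (\<Sum>x<d1. \<Sum>p<d. \<Sum>y<d4. \<Sum>x'<d1. \<Sum>q<d. \<Sum>y'<d4.
     cnj (A $$ (idx d d4 x p y, idx d d4 x' q y')) * B $$ (idx d d4 x p y, idx d d4 x' q y'))"
    by (simp only: sum_idx3)
  also have "\<dots> = ?rhs" by (rule reorder6)
  finally show ?thesis .
qed

lemma sum4_cong:
  fixes d1 d4 :: nat
  assumes "\<And>x y x' y'. x < d1 \<Longrightarrow> y < d4 \<Longrightarrow> x' < d1 \<Longrightarrow> y' < d4 \<Longrightarrow> f x y x' y' = g x y x' y'"
  shows "(\<Sum>x<d1. \<Sum>y<d4. \<Sum>x'<d1. \<Sum>y'<d4. f x y x' y') = (\<Sum>x<d1. \<Sum>y<d4. \<Sum>x'<d1. \<Sum>y'<d4. g x y x' y')"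
  using assms by (intro sum.cong refl) auto

lemma gam_cong:
  assumes "\<And>p q. p < d \<Longrightarrow> q < d \<Longrightarrow> Y p q = Z p q"
  shows "gam d v Y = gam d v Z"
  unfolding gam_def using assms by (intro sum.cong refl) auto

lemma meas_orth:
  assumes ob: "orthonormal_basis d u" and P: "\<forall>k<d. P k = proj (u k)"
    and X: "X \<in> carrier_mat (d1*d*d4) (d1*d*d4)"
  shows "hip (meas_mid d1 d d4 P X) X = hip (meas_mid d1 d d4 P X) (meas_mid d1 d d4 P X)"
proof -
  let ?M = "meas_mid d1 d d4 P X"
  let ?c = "\<lambda>k x y x' y'. cf d d4 (u k) X x y x' y'"
  have M: "?M \<in> carrier_mat (d1*d*d4) (d1*d*d4)" by (rule meas_mid_carrier)
  have blk: "(\<Sum>p<d. \<Sum>q<d. cnj (?M $$ (idx d d4 x p y, idx d d4 x' q y')) * B $$ (idx d d4 x p y, idx d d4 x' q y'))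
      = (\<Sum>k<d. cnj (?c k x y x' y') * gam d (u k) (\<lambda>p q. B $$ (idx d d4 x p y, idx d d4 x' q y')))"
    if x: "x < d1" and y: "y < d4" and x': "x' < d1" and y': "y' < d4" for x y x' y' B
  proof -
    have "(\<Sum>p<d. \<Sum>q<d. cnj (?M $$ (idx d d4 x p y, idx d d4 x' q y')) * B $$ (idx d d4 x p y, idx d d4 x' q y'))
       = (\<Sum>p<d. \<Sum>q<d. cnj (\<Sum>k<d. u k $ p * cnj (u k $ q) * ?c k x y x' y') * B $$ (idx d d4 x p y, idx d d4 x' q y'))"
      by (intro sum.cong refl) (simp add: meas_mid_entry[OF ob P X x _ y x' _ y'])
    also have "\<dots> = (\<Sum>k<d. cnj (?c k x y x' y') * gam d (u k) (\<lambda>p q. B $$ (idx d d4 x p y, idx d d4 x' q y')))"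
      by (rule G1)
    finally show ?thesis .
  qed
  have "hip ?M X = (\<Sum>x<d1. \<Sum>y<d4. \<Sum>x'<d1. \<Sum>y'<d4. \<Sum>k<d. cnj (?c k x y x' y') * ?c k x y x' y')"
    unfolding hip_blocks[OF M]
  proof (rule sum4_cong)
    fix x y x' y' assume xy: "x < d1" "y < d4" "x' < d1" "y' < d4"
    have "gam d (u k) (\<lambda>p q. X $$ (idx d d4 x p y, idx d d4 x' q y')) = ?c k x y x' y'" for k
      by (simp add: gam_def cf_def)
    then show "(\<Sum>p<d. \<Sum>q<d. cnj (?M $$ (idx d d4 x p y, idx d d4 x' q y')) * X $$ (idx d d4 x p y, idx d d4 x' q y'))
      = (\<Sum>k<d. cnj (?c k x y x' y') * ?c k x y x' y')"
      using blk[OF xy, of X] by simp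
  qed
  moreover have "hip ?M ?M = (\<Sum>x<d1. \<Sum>y<d4. \<Sum>x'<d1. \<Sum>y'<d4. \<Sum>k<d. cnj (?c k x y x' y') * ?c k x y x' y')"
    unfolding hip_blocks[OF M]
  proof (rule sum4_cong)
    fix x y x' y' assume xy: "x < d1" "y < d4" "x' < d1" "y' < d4"
    have "gam d (u k) (\<lambda>p q. ?M $$ (idx d d4 x p y, idx d d4 x' q y')) = ?c k x y x' y'" if k: "k < d" for k
    proof -
      have "gam d (u k) (\<lambda>p q. ?M $$ (idx d d4 x p y, idx d d4 x' q y'))
          = gam d (u k) (\<lambda>p q. \<Sum>l<d. u l $ p * cnj (u l $ q) * ?c l x y x' y')"
        using xy by (intro gam_cong) (simp add: meas_mid_entry[OF ob P X])
      also have "\<dots> = ?c k x y x' y'" by (rule G2[OF ob k])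
      finally show ?thesis .
    qed
    then show "(\<Sum>p<d. \<Sum>q<d. cnj (?M $$ (idx d d4 x p y, idx d d4 x' q y')) * ?M $$ (idx d d4 x p y, idx d d4 x' q y'))
      = (\<Sum>k<d. cnj (?c k x y x' y') * ?c k x y x' y')"
      using blk[OF xy, of ?M] by simp
  qed
  ultimately show ?thesis by simp
qed


lemma divmod_simp:
  fixes q r n :: nat
  assumes "r < n"
  shows "(q * n + r) div n = q" "(q * n + r) mod n = r"
  using assms by auto

lemma kron_carrier: "A \<in> carrier_mat n1 m1 \<Longrightarrow> B \<in> carrier_mat n2 m2 \<Longrightarrow> kron A B \<in> carrier_mat (n1*n2) (m1*m2)"
  by (simp add: kron_def)

lemma kron_entry:
  assumes "A \<in> carrier_mat n1 m1" "B \<in> carrier_mat n2 m2" "i1 < n1" "i2 < n2" "j1 < m1" "j2 < m2"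
  shows "kron A B $$ (i1*n2 + i2, j1*m2 + j2) = A $$ (i1, j1) * B $$ (i2, j2)"
proof -
  have "i1*n2 + i2 < n1*n2" using idx_less[of i1 n1 i2 n2 0 1] assms by (simp add: idx_def)
  moreover have "j1*m2 + j2 < m1*m2" using idx_less[of j1 m1 j2 m2 0 1] assms by (simp add: idx_def)
  ultimately show ?thesis using assms by (simp add: kron_def divmod_simp)
qed

lemma hip_self: "hip X X = complex_of_real (\<Sum>i<dim_row X. \<Sum>j<dim_col X. (cmod (X $$ (i,j)))\<^sup>2)"
  unfolding hip_def of_real_sum
  by (intro sum.cong refl) (simp add: complex_norm_square mult.commute del: of_real_power)

lemma hs_hip: "hs_norm_sq X = Re (hip X X)"
proof -
  have aX: "adj X \<in> carrier_mat (dim_col X) (dim_row X)" unfolding carrier_mat_def by simp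
  have Xc: "X \<in> carrier_mat (dim_row X) (dim_col X)" unfolding carrier_mat_def by simp
  have d: "dim_row (adj X * X) = dim_col X" by simp
  have "mtrace (adj X * X) = (\<Sum>i<dim_col X. (adj X * X) $$ (i,i))"
    unfolding mtrace_def d ..
  also have "\<dots> = (\<Sum>i<dim_col X. \<Sum>s<dim_row X. adj X $$ (i,s) * X $$ (s,i))"
  proof (rule sum.cong[OF refl])
    fix i assume "i \<in> {..<dim_col X}"
    then have i: "i < dim_col X" by simp
    show "(adj X * X) $$ (i,i) = (\<Sum>s<dim_row X. adj X $$ (i,s) * X $$ (s,i))"
      by (rule mm_entry[OF aX Xc i i])
  qed
  also have "\<dots> = (\<Sum>i<dim_col X. \<Sum>s<dim_row X. cnj (X $$ (s,i)) * X $$ (s,i))"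
  proof (rule sum.cong[OF refl], rule sum.cong[OF refl])
    fix i s assume "i \<in> {..<dim_col X}" "s \<in> {..<dim_row X}"
    then show "adj X $$ (i,s) * X $$ (s,i) = cnj (X $$ (s,i)) * X $$ (s,i)"
      by (simp add: adj_entry)
  qed
  also have "\<dots> = hip X X" unfolding hip_def by (rule sum.swap)
  finally show ?thesis by (simp add: hs_norm_sq_def)
qed

lemma hip_self_real: "hip X X = complex_of_real (hs_norm_sq X)"
  unfolding hs_hip hip_self by simp

lemma hs_nonneg: "hs_norm_sq X \<ge> 0"
  unfolding hs_hip hip_self by (simp add: sum_nonneg)

lemma hip_cnj: "dim_row A = dim_row B \<Longrightarrow> dim_col A = dim_col B \<Longrightarrow> hip B A = cnj (hip A B)"
  by (simp add: hip_def mult.commute)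

lemma hip_minus_left:
  assumes "A \<in> carrier_mat n m" "B \<in> carrier_mat n m" "C \<in> carrier_mat n m"
  shows "hip (A - B) C = hip A C - hip B C"
  using assms by (simp add: hip_def algebra_simps sum_subtractf)

lemma hip_minus_right:
  assumes "A \<in> carrier_mat n m" "B \<in> carrier_mat n m" "C \<in> carrier_mat n m"
  shows "hip C (A - B) = hip C A - hip C B"
  using assms by (simp add: hip_def algebra_simps sum_subtractf)

lemma hip_add_left:
  assumes "A \<in> carrier_mat n m" "B \<in> carrier_mat n m" "C \<in> carrier_mat n m"
  shows "hip (A + B) C = hip A C + hip B C"
  using assms by (simp add: hip_def algebra_simps sum.distrib)

lemma hip_add_right:
  assumes "A \<in> carrier_mat n m" "B \<in> carrier_mat n m" "C \<in> carrier_mat n m"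
  shows "hip C (A + B) = hip C A + hip C B"
  using assms by (simp add: hip_def algebra_simps sum.distrib)

lemma hs_add:
  assumes A: "A \<in> carrier_mat n m" and B: "B \<in> carrier_mat n m"
  shows "hs_norm_sq (A + B) = hs_norm_sq A + hs_norm_sq B + 2 * Re (hip A B)"
proof -
  have AB: "A + B \<in> carrier_mat n m" using A B by simp
  have "hip (A + B) (A + B) = hip A A + hip A B + (hip B A + hip B B)"
    by (simp add: hip_add_left[OF A B AB] hip_add_right[OF A B A] hip_add_right[OF A B B])
  also have "hip B A = cnj (hip A B)" using A B by (intro hip_cnj) auto
  finally have "Re (hip (A + B) (A + B)) = Re (hip A A) + Re (hip B B) + 2 * Re (hip A B)" by simp
  then show ?thesis by (simp add: hs_hip)
qed

lemma hip_kron: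
  assumes A: "A \<in> carrier_mat n1 m1" and B: "B \<in> carrier_mat n2 m2"
    and C: "C \<in> carrier_mat n1 m1" and D: "D \<in> carrier_mat n2 m2"
  shows "hip (kron A B) (kron C D) = hip A C * hip B D"
proof -
  have "hip (kron A B) (kron C D) = (\<Sum>i<n1*n2. \<Sum>j<m1*m2. cnj (kron A B $$ (i,j)) * kron C D $$ (i,j))"
    using A B by (simp add: hip_def kron_def)
  also have "\<dots> = (\<Sum>i1<n1. \<Sum>i2<n2. \<Sum>j1<m1. \<Sum>j2<m2.
      cnj (kron A B $$ (i1*n2+i2, j1*m2+j2)) * kron C D $$ (i1*n2+i2, j1*m2+j2))"
    by (simp only: sum_split)
  also have "\<dots> = (\<Sum>i1<n1. \<Sum>i2<n2. \<Sum>j1<m1. \<Sum>j2<m2.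
      (cnj (A $$ (i1,j1)) * C $$ (i1,j1)) * (cnj (B $$ (i2,j2)) * D $$ (i2,j2)))"
    by (intro sum.cong refl) (simp add: kron_entry[OF A B] kron_entry[OF C D])
  also have "\<dots> = hip A C * hip B D"
  proof -
    have hAC: "hip A C = (\<Sum>i1<n1. \<Sum>j1<m1. cnj (A $$ (i1,j1)) * C $$ (i1,j1))" using A by (simp add: hip_def)
    have hBD: "hip B D = (\<Sum>i2<n2. \<Sum>j2<m2. cnj (B $$ (i2,j2)) * D $$ (i2,j2))" using B by (simp add: hip_def)
    show ?thesis unfolding hAC hBD by (simp only: sum_product)
  qed
  finally show ?thesis .
qed

lemma kron_mult:
  assumes A: "A \<in> carrier_mat n1 n1" and B: "B \<in> carrier_mat n2 n2"
    and C: "C \<in> carrier_mat n1 n1" and D: "D \<in> carrier_mat n2 n2"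
  shows "kron A B * kron C D = kron (A * C) (B * D)"
proof -
  have KAB: "kron A B \<in> carrier_mat (n1*n2) (n1*n2)" using A B by (rule kron_carrier)
  have KCD: "kron C D \<in> carrier_mat (n1*n2) (n1*n2)" using C D by (rule kron_carrier)
  have AC: "A * C \<in> carrier_mat n1 n1" and BD: "B * D \<in> carrier_mat n2 n2" using A B C D by auto
  show ?thesis
  proof (rule eq_matI)
    fix i j assume i: "i < dim_row (kron (A * C) (B * D))" and j: "j < dim_col (kron (A * C) (B * D))"
    then have i: "i < n1*n2" and j: "j < n1*n2" using A B C D AC BD by (auto simp: kron_def)
    obtain i1 i2 where ii: "i1 < n1" "i2 < n2" "i = i1*n2+i2"
      using idx_decomp[of i n1 n2 1] i by (auto simp: idx_def)
    obtain j1 j2 where jj: "j1 < n1" "j2 < n2" "j = j1*n2+j2"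
      using idx_decomp[of j n1 n2 1] j by (auto simp: idx_def)
    have "(kron A B * kron C D) $$ (i,j) = (\<Sum>s<n1*n2. kron A B $$ (i,s) * kron C D $$ (s,j))"
      by (rule mm_entry[OF KAB KCD i j])
    also have "\<dots> = (\<Sum>s1<n1. \<Sum>s2<n2. kron A B $$ (i, s1*n2+s2) * kron C D $$ (s1*n2+s2, j))"
      by (simp only: sum_split)
    also have "\<dots> = (\<Sum>s1<n1. \<Sum>s2<n2. (A $$ (i1,s1) * C $$ (s1,j1)) * (B $$ (i2,s2) * D $$ (s2,j2)))"
      unfolding ii(3) jj(3)
      by (intro sum.cong refl) (simp add: kron_entry[OF A B] kron_entry[OF C D] ii jj mult.assoc mult.left_commute)
    also have "\<dots> = (A * C) $$ (i1,j1) * (B * D) $$ (i2,j2)"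
      unfolding mm_entry[OF A C ii(1) jj(1)] mm_entry[OF B D ii(2) jj(2)] by (simp only: sum_product)
    also have "\<dots> = kron (A * C) (B * D) $$ (i,j)"
      unfolding ii(3) jj(3) by (rule kron_entry[OF AC BD ii(1,2) jj(1,2), symmetric])
    finally show "(kron A B * kron C D) $$ (i,j) = kron (A * C) (B * D) $$ (i,j)" .
  qed (use KAB AC BD in \<open>auto simp: kron_def\<close>)
qed

lemma sform_kron:
  assumes s1: "sform n1 M1 K1 c1 w1" and s2: "sform n2 M2 K2 c2 w2"
  shows "sform (n1*n2) (kron M1 M2) (K1 \<times> K2) (\<lambda>(k,l). c1 k * c2 l)
          (\<lambda>(k,l) i. w1 k (i div n2) * w2 l (i mod n2))"
proof -
  have M1: "M1 \<in> carrier_mat n1 n1" and M2: "M2 \<in> carrier_mat n2 n2"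
    and f1: "finite K1" and f2: "finite K2" and c1: "\<forall>k\<in>K1. c1 k \<ge> 0" and c2: "\<forall>k\<in>K2. c2 k \<ge> 0"
    using s1 s2 by (auto simp: sform_def)
  have ent: "kron M1 M2 $$ (i,j) = (\<Sum>kl\<in>K1 \<times> K2. complex_of_real ((\<lambda>(k,l). c1 k * c2 l) kl)
           * (\<lambda>(k,l) i. w1 k (i div n2) * w2 l (i mod n2)) kl i
           * cnj ((\<lambda>(k,l) i. w1 k (i div n2) * w2 l (i mod n2)) kl j))"
    if i: "i < n1*n2" and j: "j < n1*n2" for i j
  proof -
    have n2: "n2 > 0" using i by (cases n2) auto
    have i1: "i div n2 < n1" and j1: "j div n2 < n1" using i j n2
      by (auto simp: less_mult_imp_div_less)
    have i2: "i mod n2 < n2" and j2: "j mod n2 < n2" using n2 by auto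
    have "kron M1 M2 $$ (i,j) = M1 $$ (i div n2, j div n2) * M2 $$ (i mod n2, j mod n2)"
      using M1 M2 i j by (simp add: kron_def)
    also have "\<dots> = (\<Sum>k\<in>K1. complex_of_real (c1 k) * w1 k (i div n2) * cnj (w1 k (j div n2)))
                  * (\<Sum>l\<in>K2. complex_of_real (c2 l) * w2 l (i mod n2) * cnj (w2 l (j mod n2)))"
      using s1 s2 i1 j1 i2 j2 by (simp add: sform_def)
    also have "\<dots> = (\<Sum>k\<in>K1. \<Sum>l\<in>K2. complex_of_real (c1 k * c2 l) * (w1 k (i div n2) * w2 l (i mod n2))
                  * cnj (w1 k (j div n2) * w2 l (j mod n2)))"
      unfolding sum_product
    proof (intro sum.cong refl)
      fix k l
      show "complex_of_real (c1 k) * w1 k (i div n2) * cnj (w1 k (j div n2)) *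
          (complex_of_real (c2 l) * w2 l (i mod n2) * cnj (w2 l (j mod n2))) =
          complex_of_real (c1 k * c2 l) * (w1 k (i div n2) * w2 l (i mod n2)) *
          cnj (w1 k (j div n2) * w2 l (j mod n2))"
        by (simp add: ac_simps)
    qed
    also have "\<dots> = (\<Sum>kl\<in>K1 \<times> K2. complex_of_real ((\<lambda>(k,l). c1 k * c2 l) kl)
           * (\<lambda>(k,l) i. w1 k (i div n2) * w2 l (i mod n2)) kl i
           * cnj ((\<lambda>(k,l) i. w1 k (i div n2) * w2 l (i mod n2)) kl j))"
      by (simp add: sum.cartesian_product case_prod_beta')
    finally show ?thesis .
  qed
  show ?thesis unfolding sform_def using M1 M2 f1 f2 c1 c2 ent
    by (auto simp: kron_carrier)
qed


definition sw :: "nat \<Rightarrow> nat \<Rightarrow> nat \<Rightarrow> nat" where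
  "sw a b i = (i mod a) * b + i div a"

lemma sw_less:
  fixes a b i :: nat
  assumes i: "i < b * a"
  shows "sw a b i < a * b"
proof -
  have a: "a > 0" using i by (cases a) auto
  have "i mod a < a" using a by simp
  moreover have "i div a < b" using i a by (simp add: less_mult_imp_div_less)
  ultimately show ?thesis unfolding sw_def using idx_less[of "i mod a" a "i div a" b 0 1]
    by (simp add: idx_def)
qed

lemma sw_comb:
  fixes a b x y :: nat
  assumes "y < a"
  shows "sw a b (x * a + y) = y * b + x"
  using assms by (simp add: sw_def divmod_simp)

lemma swap_carrier: "swap_mat a b R \<in> carrier_mat (b*a) (b*a)"
  by (simp add: swap_mat_def)

lemma swap_entry:
  "i < b*a \<Longrightarrow> j < b*a \<Longrightarrow> swap_mat a b R $$ (i,j) = R $$ (sw a b i, sw a b j)"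
  by (simp add: swap_mat_def sw_def)

lemma sum_sw:
  fixes a b :: nat
  shows "(\<Sum>i<b*a. g (sw a b i)) = (\<Sum>i<a*b. g i)"
proof -
  have "(\<Sum>i<b*a. g (sw a b i)) = (\<Sum>x<b. \<Sum>y<a. g (sw a b (x*a+y)))" by (rule sum_split)
  also have "\<dots> = (\<Sum>x<b. \<Sum>y<a. g (y*b+x))" by (intro sum.cong refl) (simp add: sw_comb)
  also have "\<dots> = (\<Sum>y<a. \<Sum>x<b. g (y*b+x))" by (rule sum.swap)
  also have "\<dots> = (\<Sum>i<a*b. g i)" by (rule sum_split[symmetric])
  finally show ?thesis .
qed

lemma swap_mult:
  assumes R: "R \<in> carrier_mat (a*b) (a*b)" and R': "R' \<in> carrier_mat (a*b) (a*b)"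
  shows "swap_mat a b R * swap_mat a b R' = swap_mat a b (R * R')"
proof (rule eq_matI)
  fix i j assume i: "i < dim_row (swap_mat a b (R * R'))" and j: "j < dim_col (swap_mat a b (R * R'))"
  then have i: "i < b*a" and j: "j < b*a" by (auto simp: swap_mat_def)
  have "(swap_mat a b R * swap_mat a b R') $$ (i,j) = (\<Sum>s<b*a. swap_mat a b R $$ (i,s) * swap_mat a b R' $$ (s,j))"
    by (rule mm_entry[OF swap_carrier swap_carrier i j])
  also have "\<dots> = (\<Sum>s<b*a. R $$ (sw a b i, sw a b s) * R' $$ (sw a b s, sw a b j))"
    by (intro sum.cong refl) (simp add: swap_entry i j)
  also have "\<dots> = (\<Sum>s<a*b. R $$ (sw a b i, s) * R' $$ (s, sw a b j))"
    by (rule sum_sw)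
  also have "\<dots> = (R * R') $$ (sw a b i, sw a b j)"
    by (rule mm_entry[OF R R' sw_less[OF i] sw_less[OF j], symmetric])
  also have "\<dots> = swap_mat a b (R * R') $$ (i,j)" by (simp add: swap_entry i j)
  finally show "(swap_mat a b R * swap_mat a b R') $$ (i,j) = swap_mat a b (R * R') $$ (i,j)" .
qed (auto simp: swap_mat_def)

lemma swap_sform:
  assumes sf: "sform (a*b) R K c w"
  shows "sform (b*a) (swap_mat a b R) K c (\<lambda>k i. w k (sw a b i))"
proof -
  have "swap_mat a b R $$ (i,j) = (\<Sum>k\<in>K. complex_of_real (c k) * w k (sw a b i) * cnj (w k (sw a b j)))"
    if i: "i < b*a" and j: "j < b*a" for i j
  proof -
    have "swap_mat a b R $$ (i,j) = R $$ (sw a b i, sw a b j)" by (rule swap_entry[OF i j])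
    also have "\<dots> = (\<Sum>k\<in>K. complex_of_real (c k) * w k (sw a b i) * cnj (w k (sw a b j)))"
      using sf sw_less[OF i] sw_less[OF j] unfolding sform_def by blast
    finally show ?thesis .
  qed
  then show ?thesis using sf swap_carrier unfolding sform_def by blast
qed

lemma hs_swap:
  assumes R: "R \<in> carrier_mat (a*b) (a*b)"
  shows "hs_norm_sq (swap_mat a b R) = hs_norm_sq R"
proof -
  have "hip (swap_mat a b R) (swap_mat a b R) = (\<Sum>i<b*a. \<Sum>j<b*a. cnj (R $$ (sw a b i, sw a b j)) * R $$ (sw a b i, sw a b j))"
    unfolding hip_def by (simp add: swap_mat_def sw_def)
  also have "\<dots> = (\<Sum>i<b*a. \<Sum>j<a*b. cnj (R $$ (sw a b i, j)) * R $$ (sw a b i, j))"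
    by (rule sum.cong[OF refl], rule sum_sw)
  also have "\<dots> = (\<Sum>i<a*b. \<Sum>j<a*b. cnj (R $$ (i, j)) * R $$ (i, j))"
    by (rule sum_sw)
  also have "\<dots> = hip R R" using R by (simp add: hip_def)
  finally show ?thesis by (simp add: hs_hip)
qed

definition tw :: "nat \<Rightarrow> (nat \<Rightarrow> complex vec) \<Rightarrow> nat \<Rightarrow> complex vec" where
  "tw a u m = vec (a*a) (\<lambda>i. u (m div a) $ (i div a) * u (m mod a) $ (i mod a))"

lemma tw_entry:
  fixes a :: nat
  assumes "k < a" "l < a" "p < a" "q < a"
  shows "tw a u (k*a+l) $ (p*a+q) = u k $ p * u l $ q"
proof -
  have "p*a+q < a*a" using idx_less[of p a q a 0 1] assms by (simp add: idx_def)
  then show ?thesis using assms by (simp add: tw_def divmod_simp)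
qed

lemma tw_onb:
  assumes ob: "orthonormal_basis a u"
  shows "orthonormal_basis (a*a) (tw a u)"
  unfolding orthonormal_basis_def
proof (intro conjI allI impI)
  fix k assume "k < a*a" then show "tw a u k \<in> carrier_vec (a*a)" by (simp add: tw_def)
next
  fix m m' assume m: "m < a*a" and m': "m' < a*a"
  obtain k l where kl: "k < a" "l < a" "m = k*a+l" using idx_decomp[of m a a 1] m by (auto simp: idx_def)
  obtain k' l' where kl': "k' < a" "l' < a" "m' = k'*a+l'" using idx_decomp[of m' a a 1] m' by (auto simp: idx_def)
  have "(\<Sum>i<a*a. cnj (tw a u m $ i) * tw a u m' $ i)
      = (\<Sum>p<a. \<Sum>q<a. cnj (tw a u m $ (p*a+q)) * tw a u m' $ (p*a+q))" by (rule sum_split)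
  also have "\<dots> = (\<Sum>p<a. \<Sum>q<a. (cnj (u k $ p) * u k' $ p) * (cnj (u l $ q) * u l' $ q))"
    unfolding kl(3) kl'(3) by (intro sum.cong refl) (simp add: tw_entry kl kl')
  also have "\<dots> = (\<Sum>p<a. cnj (u k $ p) * u k' $ p) * (\<Sum>q<a. cnj (u l $ q) * u l' $ q)"
    by (simp only: sum_product)
  also have "\<dots> = (if k = k' then 1 else 0) * (if l = l' then 1 else 0)"
    using ob kl kl' by (simp add: orthonormal_basis_def)
  also have "\<dots> = (if m = m' then 1 else 0)"
  proof -
    have dk: "m div a = k" "m mod a = l" unfolding kl(3) using kl(2) by (simp_all add: divmod_simp)
    have dk': "m' div a = k'" "m' mod a = l'" unfolding kl'(3) using kl'(2) by (simp_all add: divmod_simp)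
    have "(m = m') = (k = k' \<and> l = l')" using dk dk' kl(3) kl'(3) by metis
    then show ?thesis by simp
  qed
  finally show "(\<Sum>i<a*a. cnj (tw a u m $ i) * tw a u m' $ i) = (if m = m' then 1 else 0)" .
qed


lemma idx_split:
  fixes a d4 x p1 p2 y :: nat
  shows "idx (a*a) d4 x (p1*a+p2) y = (x*a+p1)*(a*d4) + (p2*d4+y)"
  unfolding idx_def by (simp add: algebra_simps)

lemma lt_comb:
  fixes p y a d4 :: nat
  assumes "p < a" "y < d4"
  shows "p*d4 + y < a*d4"
  using idx_less[of p a y d4 0 1] assms by (simp add: idx_def)

lemma CF:
  fixes a d1 d4 :: nat
  assumes ob: "orthonormal_basis a u"
    and X: "X \<in> carrier_mat (d1*a) (d1*a)" and Y: "Y \<in> carrier_mat (a*d4) (a*d4)"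
    and k: "k < a" and l: "l < a"
    and x: "x < d1" and y: "y < d4" and x': "x' < d1" and y': "y' < d4"
  shows "cf (a*a) d4 (tw a u (k*a+l)) (kron X Y) x y x' y'
       = cf a 1 (u k) X x 0 x' 0 * cf a d4 (u l) Y 0 y 0 y'"
proof -
  have ent: "kron X Y $$ (idx (a*a) d4 x (p1*a+p2) y, idx (a*a) d4 x' (q1*a+q2) y')
      = X $$ (x*a+p1, x'*a+q1) * Y $$ (p2*d4+y, q2*d4+y')"
    if "p1 < a" "p2 < a" "q1 < a" "q2 < a" for p1 p2 q1 q2
  proof -
    have "x*a+p1 < d1*a" using idx_less[of x d1 p1 a 0 1] that x by (simp add: idx_def)
    moreover have "x'*a+q1 < d1*a" using idx_less[of x' d1 q1 a 0 1] that x' by (simp add: idx_def)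
    ultimately show ?thesis unfolding idx_split
      using kron_entry[OF X Y] lt_comb that y y' by simp
  qed
  have "cf (a*a) d4 (tw a u (k*a+l)) (kron X Y) x y x' y'
      = (\<Sum>p1<a. \<Sum>p2<a. \<Sum>q<a*a. cnj (tw a u (k*a+l) $ (p1*a+p2))
          * kron X Y $$ (idx (a*a) d4 x (p1*a+p2) y, idx (a*a) d4 x' q y') * tw a u (k*a+l) $ q)"
    unfolding cf_def by (rule sum_split)
  also have "\<dots> = (\<Sum>p1<a. \<Sum>p2<a. \<Sum>q1<a. \<Sum>q2<a. cnj (tw a u (k*a+l) $ (p1*a+p2))
          * kron X Y $$ (idx (a*a) d4 x (p1*a+p2) y, idx (a*a) d4 x' (q1*a+q2) y') * tw a u (k*a+l) $ (q1*a+q2))"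
    by (rule sum.cong[OF refl], rule sum.cong[OF refl], rule sum_split)
  also have "\<dots> = (\<Sum>p1<a. \<Sum>p2<a. \<Sum>q1<a. \<Sum>q2<a.
          (cnj (u k $ p1) * X $$ (x*a+p1, x'*a+q1) * u k $ q1) * (cnj (u l $ p2) * Y $$ (p2*d4+y, q2*d4+y') * u l $ q2))"
    by (intro sum.cong refl) (simp add: ent tw_entry k l; simp add: mult_ac)
  also have "\<dots> = cf a 1 (u k) X x 0 x' 0 * cf a d4 (u l) Y 0 y 0 y'"
    unfolding cf_def idx_def by (simp only: sum_product mult_1_right add_0_right mult_zero_left add_0_left)
  finally show ?thesis .
qed

lemma meas_kron_entry:
  fixes a d1 d4 :: nat
  assumes ob: "orthonormal_basis a u" and P: "\<forall>k<a. P k = proj (u k)"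
    and X: "X \<in> carrier_mat (d1*a) (d1*a)" and Y: "Y \<in> carrier_mat (a*d4) (a*d4)"
    and x: "x < d1" and a1: "a1 < a" and a2: "a2 < a" and y: "y < d4"
    and x': "x' < d1" and b1: "b1 < a" and b2: "b2 < a" and y': "y' < d4"
  shows "meas_mid d1 (a*a) d4 (\<lambda>m. proj (tw a u m)) (kron X Y) $$ (idx (a*a) d4 x (a1*a+a2) y, idx (a*a) d4 x' (b1*a+b2) y')
    = meas_mid d1 a 1 P X $$ (x*a+a1, x'*a+b1) * meas_mid 1 a d4 P Y $$ (a2*d4+y, b2*d4+y')"
proof -
  have obw: "orthonormal_basis (a*a) (tw a u)" by (rule tw_onb[OF ob])
  have Pw: "\<forall>m<a*a. (\<lambda>m. proj (tw a u m)) m = proj (tw a u m)" by simp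
  have dims: "d1*a*(a*d4) = d1*(a*a)*d4" by (simp add: algebra_simps)
  have KXY: "kron X Y \<in> carrier_mat (d1*(a*a)*d4) (d1*(a*a)*d4)"
    using kron_carrier[OF X Y] unfolding dims .
  have m1: "a1*a+a2 < a*a" using idx_less[of a1 a a2 a 0 1] a1 a2 by (simp add: idx_def)
  have m2: "b1*a+b2 < a*a" using idx_less[of b1 a b2 a 0 1] b1 b2 by (simp add: idx_def)
  have X1: "X \<in> carrier_mat (d1*a*1) (d1*a*1)" using X by simp
  have Y1: "Y \<in> carrier_mat (1*a*d4) (1*a*d4)" using Y by simp
  have z: "(0::nat) < 1" by simp
  have eX: "meas_mid d1 a 1 P X $$ (x*a+a1, x'*a+b1) = (\<Sum>k<a. u k $ a1 * cnj (u k $ b1) * cf a 1 (u k) X x 0 x' 0)"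
    using meas_mid_entry[OF ob P X1 x a1 z x' b1 z] by (simp add: idx_def)
  have eY: "meas_mid 1 a d4 P Y $$ (a2*d4+y, b2*d4+y') = (\<Sum>l<a. u l $ a2 * cnj (u l $ b2) * cf a d4 (u l) Y 0 y 0 y')"
    using meas_mid_entry[OF ob P Y1 z a2 y z b2 y'] by (simp add: idx_def)
  have "meas_mid d1 (a*a) d4 (\<lambda>m. proj (tw a u m)) (kron X Y) $$ (idx (a*a) d4 x (a1*a+a2) y, idx (a*a) d4 x' (b1*a+b2) y')
      = (\<Sum>m<a*a. tw a u m $ (a1*a+a2) * cnj (tw a u m $ (b1*a+b2)) * cf (a*a) d4 (tw a u m) (kron X Y) x y x' y')"
    by (rule meas_mid_entry[OF obw Pw KXY x m1 y x' m2 y'])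
  also have "\<dots> = (\<Sum>k<a. \<Sum>l<a. tw a u (k*a+l) $ (a1*a+a2) * cnj (tw a u (k*a+l) $ (b1*a+b2))
       * cf (a*a) d4 (tw a u (k*a+l)) (kron X Y) x y x' y')"
    by (rule sum_split)
  also have "\<dots> = (\<Sum>k<a. \<Sum>l<a. (u k $ a1 * cnj (u k $ b1) * cf a 1 (u k) X x 0 x' 0)
       * (u l $ a2 * cnj (u l $ b2) * cf a d4 (u l) Y 0 y 0 y'))"
    by (intro sum.cong refl) (simp add: tw_entry a1 a2 b1 b2 CF[OF ob X Y _ _ x y x' y']; simp add: mult_ac)
  also have "\<dots> = meas_mid d1 a 1 P X $$ (x*a+a1, x'*a+b1) * meas_mid 1 a d4 P Y $$ (a2*d4+y, b2*d4+y')"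
    unfolding eX eY by (simp only: sum_product)
  finally show ?thesis .
qed

lemma meas_kron:
  fixes a d1 d4 :: nat
  assumes ob: "orthonormal_basis a u" and P: "\<forall>k<a. P k = proj (u k)"
    and X: "X \<in> carrier_mat (d1*a) (d1*a)" and Y: "Y \<in> carrier_mat (a*d4) (a*d4)"
  shows "meas_mid d1 (a*a) d4 (\<lambda>m. proj (tw a u m)) (kron X Y)
       = kron (meas_mid d1 a 1 P X) (meas_mid 1 a d4 P Y)"
proof -
  have A: "meas_mid d1 a 1 P X \<in> carrier_mat (d1*a) (d1*a)" using meas_mid_carrier[of d1 a 1 P X] by simp
  have B: "meas_mid 1 a d4 P Y \<in> carrier_mat (a*d4) (a*d4)" using meas_mid_carrier[of 1 a d4 P Y] by simp
  have dims: "d1*a*(a*d4) = d1*(a*a)*d4" by (simp add: algebra_simps)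
  have K: "kron (meas_mid d1 a 1 P X) (meas_mid 1 a d4 P Y) \<in> carrier_mat (d1*(a*a)*d4) (d1*(a*a)*d4)"
    using kron_carrier[OF A B] unfolding dims .
  show ?thesis
  proof (rule eq_matI)
    fix i j assume i: "i < dim_row (kron (meas_mid d1 a 1 P X) (meas_mid 1 a d4 P Y))"
      and j: "j < dim_col (kron (meas_mid d1 a 1 P X) (meas_mid 1 a d4 P Y))"
    then have i: "i < d1*(a*a)*d4" and j: "j < d1*(a*a)*d4" using K by auto
    obtain x m y where xmy: "x < d1" "m < a*a" "y < d4" "i = idx (a*a) d4 x m y" using idx_decomp[OF i] by blast
    obtain x' m' y' where xmy': "x' < d1" "m' < a*a" "y' < d4" "j = idx (a*a) d4 x' m' y'" using idx_decomp[OF j] by blast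
    obtain a1 a2 where aa: "a1 < a" "a2 < a" "m = a1*a+a2" using idx_decomp[of m a a 1] xmy(2) by (auto simp: idx_def)
    obtain b1 b2 where bb: "b1 < a" "b2 < a" "m' = b1*a+b2" using idx_decomp[of m' a a 1] xmy'(2) by (auto simp: idx_def)
    have r1: "x*a+a1 < d1*a" using idx_less[of x d1 a1 a 0 1] xmy aa by (simp add: idx_def)
    have r2: "x'*a+b1 < d1*a" using idx_less[of x' d1 b1 a 0 1] xmy' bb by (simp add: idx_def)
    have "meas_mid d1 (a*a) d4 (\<lambda>m. proj (tw a u m)) (kron X Y) $$ (i,j)
       = meas_mid d1 a 1 P X $$ (x*a+a1, x'*a+b1) * meas_mid 1 a d4 P Y $$ (a2*d4+y, b2*d4+y')"
      unfolding xmy(4) xmy'(4) aa(3) bb(3)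
      by (rule meas_kron_entry[OF ob P X Y xmy(1) aa(1,2) xmy(3) xmy'(1) bb(1,2) xmy'(3)])
    also have "\<dots> = kron (meas_mid d1 a 1 P X) (meas_mid 1 a d4 P Y) $$ (i,j)"
      unfolding xmy(4) xmy'(4) aa(3) bb(3) idx_split
      by (rule kron_entry[OF A B r1 lt_comb[OF aa(2) xmy(3)] r2 lt_comb[OF bb(2) xmy'(3)], symmetric])
    finally show "meas_mid d1 (a*a) d4 (\<lambda>m. proj (tw a u m)) (kron X Y) $$ (i,j)
       = kron (meas_mid d1 a 1 P X) (meas_mid 1 a d4 P Y) $$ (i,j)" .
  qed (use K in \<open>auto simp: meas_mid_def Let_def\<close>)
qed

lemma reduce_kron_swap:
  fixes a b :: nat
  assumes R: "\<rho> \<in> carrier_mat (a*b) (a*b)"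
  shows "reduce_mid b (a*a) b (kron (swap_mat a b \<rho>) \<rho>) = kron (reduce_mid 1 a b \<rho>) (reduce_mid 1 a b \<rho>)"
proof -
  let ?A = "reduce_mid 1 a b \<rho>"
  have A: "?A \<in> carrier_mat a a" by (simp add: reduce_mid_def)
  have Aent: "?A $$ (i,j) = (\<Sum>c<b. \<rho> $$ (i*b+c, j*b+c))" if "i < a" "j < a" for i j
    using that by (simp add: reduce_mid_def)
  have S: "swap_mat a b \<rho> \<in> carrier_mat (b*a) (b*a)" by (rule swap_carrier)
  show ?thesis
  proof (rule eq_matI)
    fix i j assume i: "i < dim_row (kron ?A ?A)" and j: "j < dim_col (kron ?A ?A)"
    then have i: "i < a*a" and j: "j < a*a" using A by (auto simp: kron_def)
    obtain a1 a2 where aa: "a1 < a" "a2 < a" "i = a1*a+a2" using idx_decomp[of i a a 1] i by (auto simp: idx_def)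
    obtain b1 b2 where bb: "b1 < a" "b2 < a" "j = b1*a+b2" using idx_decomp[of j a a 1] j by (auto simp: idx_def)
    have "reduce_mid b (a*a) b (kron (swap_mat a b \<rho>) \<rho>) $$ (i,j)
      = (\<Sum>c<b. \<Sum>c'<b. kron (swap_mat a b \<rho>) \<rho> $$ (idx (a*a) b c i c', idx (a*a) b c j c'))"
      using i j by (simp add: reduce_mid_def idx_def)
    also have "\<dots> = (\<Sum>c<b. \<Sum>c'<b. \<rho> $$ (a1*b+c, b1*b+c) * \<rho> $$ (a2*b+c', b2*b+c'))"
    proof (intro sum.cong refl)
      fix c c' assume c: "c \<in> {..<b}" and c': "c' \<in> {..<b}"
      have r1: "c*a+a1 < b*a" using idx_less[of c b a1 a 0 1] c aa by (simp add: idx_def)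
      have r2: "c*a+b1 < b*a" using idx_less[of c b b1 a 0 1] c bb by (simp add: idx_def)
      have "kron (swap_mat a b \<rho>) \<rho> $$ (idx (a*a) b c i c', idx (a*a) b c j c')
          = swap_mat a b \<rho> $$ (c*a+a1, c*a+b1) * \<rho> $$ (a2*b+c', b2*b+c')"
        unfolding aa(3) bb(3) idx_split
        using kron_entry[OF S R r1 lt_comb[OF aa(2)] r2 lt_comb[OF bb(2)]] c' by simp
      also have "swap_mat a b \<rho> $$ (c*a+a1, c*a+b1) = \<rho> $$ (a1*b+c, b1*b+c)"
        using swap_entry[OF r1 r2] sw_comb[OF aa(1)] sw_comb[OF bb(1)] by simp
      finally show "kron (swap_mat a b \<rho>) \<rho> $$ (idx (a*a) b c i c', idx (a*a) b c j c')
          = \<rho> $$ (a1*b+c, b1*b+c) * \<rho> $$ (a2*b+c', b2*b+c')" .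
    qed
    also have "\<dots> = ?A $$ (a1,b1) * ?A $$ (a2,b2)"
      unfolding Aent[OF aa(1) bb(1)] Aent[OF aa(2) bb(2)] by (simp only: sum_product)
    also have "\<dots> = kron ?A ?A $$ (i,j)"
      unfolding aa(3) bb(3) by (rule kron_entry[OF A A aa(1,2) bb(1,2), symmetric])
    finally show "reduce_mid b (a*a) b (kron (swap_mat a b \<rho>) \<rho>) $$ (i,j) = kron ?A ?A $$ (i,j)" .
  qed (use A in \<open>auto simp: reduce_mid_def kron_def\<close>)
qed


lemma minus_plus_cancel_mat:
  fixes A B :: "complex mat"
  assumes "A \<in> carrier_mat n m" "B \<in> carrier_mat n m"
  shows "(A - B) + B = A"
  using assms by (intro eq_matI) auto

lemma kron_diff:
  fixes A A' B B' :: "complex mat"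
  assumes A: "A \<in> carrier_mat n1 m1" and A': "A' \<in> carrier_mat n1 m1"
    and B: "B \<in> carrier_mat n2 m2" and B': "B' \<in> carrier_mat n2 m2"
  shows "kron A B - kron A' B' = kron A (B - B') + kron (A - A') B'"
proof (rule eq_matI)
  fix i j assume i: "i < dim_row (kron A (B - B') + kron (A - A') B')"
    and j: "j < dim_col (kron A (B - B') + kron (A - A') B')"
  then have i: "i < n1*n2" and j: "j < m1*m2" using A B A' B' by (auto simp: kron_def)
  have n2: "n2 > 0" using i by (cases n2) auto
  have m2: "m2 > 0" using j by (cases m2) auto
  have i1: "i div n2 < n1" and j1: "j div m2 < m1" using i j n2 m2 by (auto simp: less_mult_imp_div_less)
  have i2: "i mod n2 < n2" and j2: "j mod m2 < m2" using n2 m2 by auto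
  show "(kron A B - kron A' B') $$ (i,j) = (kron A (B - B') + kron (A - A') B') $$ (i,j)"
    using A A' B B' i j i1 j1 i2 j2 by (simp add: kron_def algebra_simps)
qed (use A B in \<open>auto simp: kron_def\<close>)

lemma meas_bound:
  assumes vN: "vN_measurement d Q" and S: "S \<in> carrier_mat (d1*d*d4) (d1*d*d4)"
  shows "hs_norm_sq (S - meas_mid d1 d d4 Q S) \<le> hs_norm_sq S"
proof -
  obtain v where ob: "orthonormal_basis d v" and Q: "\<forall>k<d. Q k = proj (v k)"
    using vN unfolding vN_measurement_def by blast
  let ?M = "meas_mid d1 d d4 Q S"
  have M: "?M \<in> carrier_mat (d1*d*d4) (d1*d*d4)" by (rule meas_mid_carrier)
  have SM: "S - ?M \<in> carrier_mat (d1*d*d4) (d1*d*d4)" using S M by (auto intro: minus_carrier_mat)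
  have "hip (S - ?M) ?M = hip S ?M - hip ?M ?M" by (rule hip_minus_left[OF S M M])
  also have "hip S ?M = cnj (hip ?M S)" using S M by (intro hip_cnj) auto
  also have "hip ?M S = hip ?M ?M" by (rule meas_orth[OF ob Q S])
  finally have "hip (S - ?M) ?M = 0" unfolding hip_self_real by simp
  moreover have "hs_norm_sq S = hs_norm_sq (S - ?M) + hs_norm_sq ?M + 2 * Re (hip (S - ?M) ?M)"
    using hs_add[OF SM M] minus_plus_cancel_mat[OF S M] by simp
  ultimately show ?thesis using hs_nonneg[of ?M] by simp
qed

theorem mainTheorem3:
  fixes dA dB :: nat and \<rho> :: "complex mat"
  assumes "density_mat (dA * dB) \<rho>"
  shows "N_H_b dB dA dA dB (kron (swap_mat dA dB \<rho>) \<rho>) \<ge> N_H dA dB \<rho>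
       \<and> (N_H dA dB \<rho> > 0 \<longrightarrow> N_H_b dB dA dA dB (kron (swap_mat dA dB \<rho>) \<rho>) > 0)"
proof -
  let ?\<sigma> = "kron (swap_mat dA dB \<rho>) \<rho>"
  have P\<rho>: "psd_mat (dA*dB) \<rho>" and tr: "mtrace \<rho> = 1" using assms by (auto simp: density_mat_def)
  have \<rho>c: "\<rho> \<in> carrier_mat (dA*dB) (dA*dB)" by (rule psd_carrier[OF P\<rho>])
  have H\<rho>: "hermitian_mat (dA*dB) \<rho>" by (rule psd_herm[OF P\<rho>])
  define R where "R = msqrt (dA*dB) \<rho>"
  have PR: "psd_mat (dA*dB) R" and RR: "R * R = \<rho>" using msqrt_props[OF P\<rho>] unfolding R_def by auto
  have Rc: "R \<in> carrier_mat (dA*dB) (dA*dB)" by (rule psd_carrier[OF PR])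
  define X where "X = swap_mat dA dB R"
  have Xc: "X \<in> carrier_mat (dB*dA) (dB*dA)" unfolding X_def by (rule swap_carrier)
  obtain u0 l0 where sfR: "sform (dA*dB) R {..<dA*dB} l0 (\<lambda>k i. u0 k $ i)" using psd_sform[OF PR] by blast
  have sfX: "sform (dB*dA) X {..<dA*dB} l0 (\<lambda>k i. u0 k $ sw dA dB i)"
    unfolding X_def by (rule swap_sform[OF sfR])
  define S' where "S' = kron X R"
  have PS: "psd_mat ((dB*dA)*(dA*dB)) S'" unfolding S'_def by (rule sform_psd[OF sform_kron[OF sfX sfR]])
  have nn: "dB*dA*dA*dB = (dB*dA)*(dA*dB)" by (simp add: mult.assoc)
  have nn2: "dB*(dA*dA)*dB = (dB*dA)*(dA*dB)" by (simp add: mult.assoc)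
  have S'c: "S' \<in> carrier_mat ((dB*dA)*(dA*dB)) ((dB*dA)*(dA*dB))" unfolding S'_def by (rule kron_carrier[OF Xc Rc])
  have S'c2: "S' \<in> carrier_mat (dB*(dA*dA)*dB) (dB*(dA*dA)*dB)" using S'c unfolding nn2 .
  have SS: "S' * S' = ?\<sigma>"
  proof -
    have "S' * S' = kron (X * X) (R * R)" unfolding S'_def by (rule kron_mult[OF Xc Rc Xc Rc])
    also have "X * X = swap_mat dA dB (R * R)" unfolding X_def by (rule swap_mult[OF Rc Rc])
    finally show ?thesis unfolding RR .
  qed
  have msq: "msqrt (dB*dA*dA*dB) ?\<sigma> = S'" unfolding nn by (rule msqrt_eq[OF PS SS])
  let ?\<rho>A = "reduce_mid 1 dA dB \<rho>"
  have red: "reduce_mid dB (dA*dA) dB ?\<sigma> = kron ?\<rho>A ?\<rho>A" by (rule reduce_kron_swap[OF \<rho>c])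
  have \<rho>Ac: "?\<rho>A \<in> carrier_mat dA dA" by (simp add: reduce_mid_def)
  have \<rho>Aent: "?\<rho>A $$ (i,j) = (\<Sum>c<dB. \<rho> $$ (i*dB+c, j*dB+c))" if "i < dA" "j < dA" for i j
    using that by (simp add: reduce_mid_def)
  have HA: "hermitian_mat dA ?\<rho>A"
  proof -
    have "adj ?\<rho>A = ?\<rho>A"
    proof (rule eq_matI)
      fix i j assume i: "i < dim_row ?\<rho>A" and j: "j < dim_col ?\<rho>A"
      then have i: "i < dA" and j: "j < dA" using \<rho>Ac by auto
      have "adj ?\<rho>A $$ (i,j) = cnj (?\<rho>A $$ (j,i))" using i j \<rho>Ac by (simp add: adj_entry)
      also have "\<dots> = (\<Sum>c<dB. cnj (\<rho> $$ (j*dB+c, i*dB+c)))" unfolding \<rho>Aent[OF j i] by simp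
      also have "\<dots> = (\<Sum>c<dB. \<rho> $$ (i*dB+c, j*dB+c))"
      proof (rule sum.cong[OF refl])
        fix c assume "c \<in> {..<dB}"
        then have c: "c < dB" by simp
        show "cnj (\<rho> $$ (j*dB+c, i*dB+c)) = \<rho> $$ (i*dB+c, j*dB+c)"
          using herm_entry[OF H\<rho> lt_comb[OF j c] lt_comb[OF i c]] by simp
      qed
      also have "\<dots> = ?\<rho>A $$ (i,j)" by (rule \<rho>Aent[OF i j, symmetric])
      finally show "adj ?\<rho>A $$ (i,j) = ?\<rho>A $$ (i,j)" .
    qed (use \<rho>Ac in auto)
    then show ?thesis using \<rho>Ac by (simp add: hermitian_mat_def)
  qed
  define SA where "SA = {hs_norm_sq (R - meas_mid 1 dA dB P R) | P. vN_measurement dA P \<and> meas_mid 1 dA 1 P ?\<rho>A = ?\<rho>A}"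
  define SB where "SB = {hs_norm_sq (S' - meas_mid dB (dA*dA) dB P S') | P. vN_measurement (dA*dA) P
      \<and> meas_mid 1 (dA*dA) 1 P (kron ?\<rho>A ?\<rho>A) = kron ?\<rho>A ?\<rho>A}"
  have NH: "N_H dA dB \<rho> = Sup SA" unfolding N_H_def Let_def SA_def R_def ..
  have NHb: "N_H_b dB dA dA dB ?\<sigma> = Sup SB" unfolding N_H_b_def Let_def SB_def msq red ..
  have hsX: "hs_norm_sq X = 1"
  proof -
    have "hs_norm_sq X = hs_norm_sq R" unfolding X_def by (rule hs_swap[OF Rc])
    also have "\<dots> = Re (mtrace (adj R * R))" by (simp add: hs_norm_sq_def)
    also have "adj R = R" using psd_herm[OF PR] by (simp add: hermitian_mat_def)
    finally show ?thesis using RR tr by simp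
  qed
  have SAne: "SA \<noteq> {}"
  proof -
    obtain u l where ob: "orthonormal_basis dA u" and ev: "\<forall>k<dA. ?\<rho>A *\<^sub>v u k = complex_of_real (l k) \<cdot>\<^sub>v u k"
      using spectral[OF HA] by blast
    define P0 where "P0 = (\<lambda>k. proj (u k))"
    have P0u: "\<forall>k<dA. P0 k = proj (u k)" by (simp add: P0_def)
    have vN: "vN_measurement dA P0" unfolding vN_measurement_def using ob P0u by blast
    have uc: "u k \<in> carrier_vec dA" if "k < dA" for k using ob that by (simp add: orthonormal_basis_def)
    have cfl: "cf dA 1 (u k) ?\<rho>A 0 0 0 0 = complex_of_real (l k)" if k: "k < dA" for k
    proof -
      have "cf dA 1 (u k) ?\<rho>A 0 0 0 0 = (\<Sum>p1<dA. \<Sum>q1<dA. cnj (u k $ p1) * ?\<rho>A $$ (p1, q1) * u k $ q1)"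
        by (simp add: cf_def idx_def)
      also have "\<dots> = ipd dA (u k) (?\<rho>A *\<^sub>v u k)"
        unfolding ipd_def
      proof (intro sum.cong refl)
        fix p1 assume "p1 \<in> {..<dA}"
        then have p1: "p1 < dA" by simp
        show "(\<Sum>q1<dA. cnj (u k $ p1) * ?\<rho>A $$ (p1, q1) * u k $ q1) = cnj (u k $ p1) * (?\<rho>A *\<^sub>v u k) $ p1"
          unfolding mv_entry[OF \<rho>Ac uc[OF k] p1] by (simp only: sum_distrib_left mult.assoc)
      qed
      also have "\<dots> = complex_of_real (l k) * ipd dA (u k) (u k)"
        using ev k uc[OF k] by (simp add: ipd_smult_right)
      also have "ipd dA (u k) (u k) = 1" using ob k by (simp add: orthonormal_basis_def ipd_def)
      finally show ?thesis by simp
    qed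
    have inv: "meas_mid 1 dA 1 P0 ?\<rho>A = ?\<rho>A"
    proof (rule eq_matI)
      fix p q assume p: "p < dim_row ?\<rho>A" and q: "q < dim_col ?\<rho>A"
      then have p: "p < dA" and q: "q < dA" using \<rho>Ac by auto
      have \<rho>A1: "?\<rho>A \<in> carrier_mat (1*dA*1) (1*dA*1)" using \<rho>Ac by simp
      have z: "(0::nat) < 1" by simp
      have "meas_mid 1 dA 1 P0 ?\<rho>A $$ (p,q) = (\<Sum>k<dA. u k $ p * cnj (u k $ q) * cf dA 1 (u k) ?\<rho>A 0 0 0 0)"
        using meas_mid_entry[OF ob P0u \<rho>A1 z p z z q z] by (simp add: idx_def)
      also have "\<dots> = (\<Sum>k<dA. complex_of_real (l k) * u k $ p * cnj (u k $ q))"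
      proof (intro sum.cong refl)
        fix k assume "k \<in> {..<dA}"
        then have k: "k < dA" by simp
        show "u k $ p * cnj (u k $ q) * cf dA 1 (u k) ?\<rho>A 0 0 0 0 = complex_of_real (l k) * u k $ p * cnj (u k $ q)"
          unfolding cfl[OF k] by (simp add: ac_simps)
      qed
      also have "\<dots> = ?\<rho>A $$ (p,q)" by (rule spectral_entries[OF \<rho>Ac ob ev p q, symmetric])
      finally show "meas_mid 1 dA 1 P0 ?\<rho>A $$ (p,q) = ?\<rho>A $$ (p,q)" .
    qed (use \<rho>Ac in \<open>auto simp: meas_mid_def Let_def\<close>)
    show ?thesis unfolding SA_def using vN inv by blast
  qed
  have bdd: "bdd_above SB"
  proof (rule bdd_aboveI)
    fix y assume "y \<in> SB"
    then obtain Q where Q: "vN_measurement (dA*dA) Q" and y: "y = hs_norm_sq (S' - meas_mid dB (dA*dA) dB Q S')"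
      unfolding SB_def by blast
    show "y \<le> hs_norm_sq S'" unfolding y by (rule meas_bound[OF Q S'c2])
  qed
  have main: "\<exists>y\<in>SB. x \<le> y" if x: "x \<in> SA" for x
  proof -
    obtain P where vN: "vN_measurement dA P" and inv: "meas_mid 1 dA 1 P ?\<rho>A = ?\<rho>A"
      and xP: "x = hs_norm_sq (R - meas_mid 1 dA dB P R)"
      using x unfolding SA_def by blast
    obtain u where ob: "orthonormal_basis dA u" and Pu: "\<forall>k<dA. P k = proj (u k)"
      using vN unfolding vN_measurement_def by blast
    define P' where "P' = (\<lambda>m. proj (tw dA u m))"
    have vN': "vN_measurement (dA*dA) P'" unfolding vN_measurement_def P'_def using tw_onb[OF ob] by blast
    have \<rho>A1: "?\<rho>A \<in> carrier_mat (1*dA) (1*dA)" and \<rho>A2: "?\<rho>A \<in> carrier_mat (dA*1) (dA*1)" using \<rho>Ac by auto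
    have inv': "meas_mid 1 (dA*dA) 1 P' (kron ?\<rho>A ?\<rho>A) = kron ?\<rho>A ?\<rho>A"
      unfolding P'_def meas_kron[OF ob Pu \<rho>A1 \<rho>A2] inv ..
    define X' where "X' = meas_mid dB dA 1 P X"
    define Y' where "Y' = meas_mid 1 dA dB P R"
    have X'c: "X' \<in> carrier_mat (dB*dA) (dB*dA)" unfolding X'_def using meas_mid_carrier[of dB dA 1 P X] by simp
    have Y'c: "Y' \<in> carrier_mat (dA*dB) (dA*dB)" unfolding Y'_def using meas_mid_carrier[of 1 dA dB P R] by simp
    have RY'c: "R - Y' \<in> carrier_mat (dA*dB) (dA*dB)" using Rc Y'c by (auto intro: minus_carrier_mat)
    have XX'c: "X - X' \<in> carrier_mat (dB*dA) (dB*dA)" using Xc X'c by (auto intro: minus_carrier_mat)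
    have K1: "kron X (R - Y') \<in> carrier_mat ((dB*dA)*(dA*dB)) ((dB*dA)*(dA*dB))" by (rule kron_carrier[OF Xc RY'c])
    have K2: "kron (X - X') Y' \<in> carrier_mat ((dB*dA)*(dA*dB)) ((dB*dA)*(dA*dB))" by (rule kron_carrier[OF XX'c Y'c])
    have mk: "meas_mid dB (dA*dA) dB P' S' = kron X' Y'"
      unfolding S'_def P'_def X'_def Y'_def by (rule meas_kron[OF ob Pu Xc Rc])
    have Z: "S' - meas_mid dB (dA*dA) dB P' S' = kron X (R - Y') + kron (X - X') Y'"
      unfolding mk unfolding S'_def by (rule kron_diff[OF Xc X'c Rc Y'c])
    have R1: "R \<in> carrier_mat (1*dA*dB) (1*dA*dB)" using Rc by simp
    have orth: "hip (R - Y') Y' = 0"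
    proof -
      have "hip (R - Y') Y' = hip R Y' - hip Y' Y'" by (rule hip_minus_left[OF Rc Y'c Y'c])
      also have "hip R Y' = cnj (hip Y' R)" using Rc Y'c by (intro hip_cnj) auto
      also have "hip Y' R = hip Y' Y'" unfolding Y'_def by (rule meas_orth[OF ob Pu R1])
      finally show ?thesis unfolding hip_self_real by simp
    qed
    have "hs_norm_sq (S' - meas_mid dB (dA*dA) dB P' S')
        = hs_norm_sq (kron X (R - Y')) + hs_norm_sq (kron (X - X') Y') + 2 * Re (hip (kron X (R - Y')) (kron (X - X') Y'))"
      unfolding Z by (rule hs_add[OF K1 K2])
    also have "hip (kron X (R - Y')) (kron (X - X') Y') = hip X (X - X') * hip (R - Y') Y'"
      by (rule hip_kron[OF Xc RY'c XX'c Y'c])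
    also have "hs_norm_sq (kron X (R - Y')) = hs_norm_sq X * hs_norm_sq (R - Y')"
    proof -
      have "hs_norm_sq (kron X (R - Y')) = Re (hip (kron X (R - Y')) (kron X (R - Y')))" by (rule hs_hip)
      also have "hip (kron X (R - Y')) (kron X (R - Y')) = hip X X * hip (R - Y') (R - Y')"
        by (rule hip_kron[OF Xc RY'c Xc RY'c])
      also have "hip X X = complex_of_real (hs_norm_sq X)" by (rule hip_self_real)
      also have "hip (R - Y') (R - Y') = complex_of_real (hs_norm_sq (R - Y'))" by (rule hip_self_real)
      finally show ?thesis by simp
    qed
    finally have "hs_norm_sq (S' - meas_mid dB (dA*dA) dB P' S') = hs_norm_sq (R - Y') + hs_norm_sq (kron (X - X') Y')"
      using orth hsX by simp
    then have "x \<le> hs_norm_sq (S' - meas_mid dB (dA*dA) dB P' S')"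
      using xP hs_nonneg[of "kron (X - X') Y'"] unfolding Y'_def by simp
    moreover have "hs_norm_sq (S' - meas_mid dB (dA*dA) dB P' S') \<in> SB"
      unfolding SB_def using vN' inv' by blast
    ultimately show ?thesis by blast
  qed
  have le: "Sup SA \<le> Sup SB" by (rule cSup_mono[OF SAne bdd main])
  show ?thesis unfolding NH NHb using le by simp
qed


end
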